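(* Let $\mathcal{A}$ be a collection of real valued stochastic processes on $[0,t]$ such that there exists a fixed subset $\Omega_{\mathcal{A}}\subset\Omega$ of full measure on which every element of $\mathcal{A}$ is continuous and has finite first variation. Fix a finite collection $\{W_1,\dots,W_N\}$ of independent Wiener processes and a sequence of partitions $0=s^n_1\le\cdots\le s^n_{m(n)}=t$ with mesh $\max_j(s^n_{j+1}-s^n_j)\to0$ as $n\to\infty$. Then there exist a fixed subset $\Omega'\subset\Omega_{\mathcal{A}}$ of full measure and a fixed subsequence $\{t^n_j\}_{j=0}^{k(n)}$ of the sequence of partitions such that whenever $$Z(s)=X(s)+\sum_{i=1}^NY_i(s)W_i(s)$$ with $X,Y_1,\dots,Y_N\in\mathcal{A}$, then on $\Omega'$ $$\sum_{j=1}^{k(n)}|Z(t^n_j)-Z(t^n_{j-1})|^2\longrightarrow\sum_{i=1}^N\int_0^tY_i^2(s)\,ds\quad\text{as }n\to\infty.$$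
   Context: No adaptedness of $X,Y_i$ to the Wiener processes is assumed. *)

theory Defs
  imports "HOL-Probability.Probability"
begin

definition bounded_variation_on :: "(real \<Rightarrow> real) \<Rightarrow> real \<Rightarrow> real \<Rightarrow> bool" where
  "bounded_variation_on f a b \<longleftrightarrow>
     (\<exists>B. \<forall>(p::nat \<Rightarrow> real) k. p 0 = a \<and> p k = b \<and> (\<forall>j<k. p j \<le> p (Suc j)) \<longrightarrow>
        (\<Sum>j<k. \<bar>f (p (Suc j)) - f (p j)\<bar>) \<le> B)"

definition wiener_process :: "'a measure \<Rightarrow> (real \<Rightarrow> 'a \<Rightarrow> real) \<Rightarrow> bool" where
  "wiener_process M W \<longleftrightarrow>
     prob_space M \<and>
     (\<forall>s\<ge>0. W s \<in> borel_measurable M) \<and>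
     (AE \<omega> in M. W 0 \<omega> = 0) \<and>
     (AE \<omega> in M. continuous_on {0..} (\<lambda>s. W s \<omega>)) \<and>
     (\<forall>s u. 0 \<le> s \<and> s < u \<longrightarrow>
        distributed M lborel (\<lambda>\<omega>. W u \<omega> - W s \<omega>) (\<lambda>x. ennreal (normal_density 0 (sqrt (u - s)) x))) \<and>
     (\<forall>(r::nat \<Rightarrow> real) k. 0 \<le> r 0 \<and> (\<forall>j<k. r j < r (Suc j)) \<longrightarrow>
        prob_space.indep_vars M (\<lambda>_. borel) (\<lambda>j \<omega>. W (r (Suc j)) \<omega> - W (r j) \<omega>) {..<k})"

definition indep_processes :: "'a measure \<Rightarrow> real \<Rightarrow> (nat \<Rightarrow> real \<Rightarrow> 'a \<Rightarrow> real) \<Rightarrow> nat set \<Rightarrow> bool" where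
  "indep_processes M t W I \<longleftrightarrow>
     prob_space.indep_vars M (\<lambda>_. PiM {0..t} (\<lambda>_. borel))
        (\<lambda>i \<omega>. restrict (\<lambda>s. W i s \<omega>) {0..t}) I"

end

theory Submission
  imports Defs
begin


definition ispart :: "(nat \<Rightarrow> real) \<Rightarrow> nat \<Rightarrow> real \<Rightarrow> real \<Rightarrow> bool" where
  "ispart p L t h \<longleftrightarrow> 1 \<le> L \<and> p 1 = 0 \<and> p L = t \<and>
     (\<forall>j\<in>{1..<L}. p j \<le> p (Suc j) \<and> p (Suc j) - p j \<le> h)"

lemma ispart_mono:
  assumes "ispart p L t h" "1 \<le> i" "i \<le> j" "j \<le> L"
  shows "p i \<le> p j"
  using assms(3,4)
proof (induction j rule: dec_induct)
  case base then show ?case by simp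
next
  case (step k)
  then have "p k \<le> p (Suc k)" using assms(1,2) unfolding ispart_def by auto
  with step show ?case by simp
qed

lemma ispart_range:
  assumes "ispart p L t h" "1 \<le> j" "j \<le> L"
  shows "0 \<le> p j" "p j \<le> t"
proof -
  have "p 1 \<le> p j" by (rule ispart_mono[OF assms(1)]) (use assms in auto)
  then show "0 \<le> p j" using assms(1) unfolding ispart_def by simp
  have "p j \<le> p L" by (rule ispart_mono[OF assms(1)]) (use assms in auto)
  then show "p j \<le> t" using assms(1) unfolding ispart_def by simp
qed

lemma ispart_t: "ispart p L t h \<Longrightarrow> 0 \<le> t"
  using ispart_range[of p L t h L] unfolding ispart_def by auto

lemma telescope_if:
  fixes f :: "nat \<Rightarrow> real"
  shows "(\<Sum>k\<le>K. f k - (if k = 0 then 0 else f (k - 1))) = f K"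
  by (induction K) auto


lemma local_integral_bound:
  fixes g :: "real \<Rightarrow> real"
  assumes g: "continuous_on {a..b} g" and ab: "a \<le> b"
    and uc: "\<forall>x\<in>{a..b}. \<bar>g x - g b\<bar> \<le> \<epsilon>"
  shows "\<bar>integral {a..b} g - g b * (b - a)\<bar> \<le> \<epsilon> * (b - a)"
proof -
  have c: "continuous_on {a..b} (\<lambda>x. g x - g b)"
    by (intro continuous_intros g)
  have "norm (integral {a..b} (\<lambda>x. g x - g b)) \<le> \<epsilon> * (b - a)"
    by (rule integral_bound[OF ab c]) (use uc in auto)
  moreover have "integral {a..b} (\<lambda>x. g x - g b) = integral {a..b} g - g b * (b - a)"
    using integrable_continuous_interval[OF g] ab
    by (subst integral_diff) (auto simp: content_real)
  ultimately show ?thesis by simp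
qed

lemma riemann_grid:
  fixes g :: "real \<Rightarrow> real"
  assumes g: "continuous_on {0..t} g" and t: "0 \<le> t" and K: "0 < K"
    and uc: "\<forall>x\<in>{0..t}. \<forall>y\<in>{0..t}. \<bar>x - y\<bar> \<le> t / real K \<longrightarrow> \<bar>g x - g y\<bar> \<le> \<epsilon>"
  shows "\<bar>(\<Sum>k\<in>{1..K}. g (t*real k/real K) * (t*real k/real K - t*real (k-1)/real K))
           - integral {0..t} g\<bar> \<le> \<epsilon> * t"
proof -
  have gen: "K' \<le> K \<Longrightarrow> \<bar>(\<Sum>k\<in>{1..K'}. g (t*real k/real K) * (t*real k/real K - t*real (k-1)/real K))
           - integral {0..t*real K'/real K} g\<bar> \<le> \<epsilon> * (t*real K'/real K)" for K'
  proof (induction K')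
    case 0
    then show ?case by simp
  next
    case (Suc K')
    define a where "a = t*real K'/real K"
    define b where "b = t*real (Suc K')/real K"
    have a0: "0 \<le> a" using t K by (simp add: a_def)
    have ab: "a \<le> b" using t K by (simp add: a_def b_def divide_right_mono mult_left_mono)
    have "t * real (Suc K') \<le> t * real K" using Suc.prems t by (intro mult_left_mono) auto
    then have bt: "b \<le> t" using K unfolding b_def by (simp add: pos_divide_le_eq)
    have ba: "b - a = t / real K" using K by (simp add: a_def b_def field_simps)
    have gi: "g integrable_on {0..b}"
      by (rule integrable_on_subinterval[OF integrable_continuous_interval[OF g]]) (use bt in auto)
    have split: "integral {0..b} g = integral {0..a} g + integral {a..b} g"
      using Henstock_Kurzweil_Integration.integral_combine[OF a0 ab gi] by simp
    have gab: "continuous_on {a..b} g"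
      by (rule continuous_on_subset[OF g]) (use a0 bt in auto)
    have loc: "\<bar>integral {a..b} g - g b * (b - a)\<bar> \<le> \<epsilon> * (b - a)"
      apply (rule local_integral_bound[OF gab ab])
      using uc a0 bt ba by auto
    have IH: "\<bar>(\<Sum>k\<in>{1..K'}. g (t*real k/real K) * (t*real k/real K - t*real (k-1)/real K))
           - integral {0..a} g\<bar> \<le> \<epsilon> * a"
      using Suc by (simp add: a_def)
    have "(\<Sum>k\<in>{1..Suc K'}. g (t*real k/real K) * (t*real k/real K - t*real (k-1)/real K))
       = (\<Sum>k\<in>{1..K'}. g (t*real k/real K) * (t*real k/real K - t*real (k-1)/real K)) + g b * (b - a)"
      by (simp add: a_def b_def)
    then show ?case using IH loc split unfolding b_def[symmetric]
      by (simp add: algebra_simps)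
  qed
  show ?thesis using gen[of K] K by simp
qed


lemma weighted_riemann:
  fixes q :: "nat \<Rightarrow> nat \<Rightarrow> real" and L :: "nat \<Rightarrow> nat" and h :: "nat \<Rightarrow> real"
    and a :: "nat \<Rightarrow> nat \<Rightarrow> real" and g :: "real \<Rightarrow> real"
  assumes P: "\<forall>n. ispart (q n) (L n) t (h n)" and h: "h \<longlonglongrightarrow> 0"
    and g: "continuous_on {0..t} g"
    and C: "\<forall>n. (\<Sum>j\<in>{1..<L n}. \<bar>a n j\<bar>) \<le> C"
    and conv: "\<forall>K k. 0 < K \<longrightarrow> k \<le> K \<longrightarrow>
       (\<lambda>n. \<Sum>j\<in>{1..<L n}. if q n (Suc j) \<le> t * real k / real K then a n j else 0)
         \<longlonglongrightarrow> c * (t * real k / real K)"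
  shows "(\<lambda>n. \<Sum>j\<in>{1..<L n}. g (q n j) * a n j) \<longlonglongrightarrow> c * integral {0..t} g"
proof (rule LIMSEQ_I)
  fix e :: real assume e: "0 < e"
  have t: "0 \<le> t" using P ispart_t by blast
  define C' where "C' = \<bar>C\<bar>"
  define \<epsilon> where "\<epsilon> = e / (2 * (C' + \<bar>c\<bar> * t + 1))"
  have den: "0 < C' + \<bar>c\<bar> * t + 1" using t by (simp add: C'_def add_nonneg_pos)
  have epos: "0 < \<epsilon>" using e den by (simp add: \<epsilon>_def)
  have eq_e: "\<epsilon> * (C' + \<bar>c\<bar> * t + 1) = e / 2" using den unfolding \<epsilon>_def by (simp add: field_simps)
  have "uniformly_continuous_on {0..t} g" by (rule compact_uniformly_continuous[OF g compact_Icc])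
  then obtain \<delta> where dpos: "\<delta> > 0"
      and uc: "\<And>x y. x\<in>{0..t} \<Longrightarrow> y\<in>{0..t} \<Longrightarrow> dist y x < \<delta> \<Longrightarrow> dist (g y) (g x) < \<epsilon>"
    unfolding uniformly_continuous_on_def using epos by metis
  obtain n0 :: nat where n0: "2 * t / \<delta> < real n0" using reals_Archimedean2 by blast
  define K where "K = Suc n0"
  have K: "0 < K" by (simp add: K_def)
  have "2 * t / \<delta> < real K" using n0 by (simp add: K_def)
  then have "2 * t < \<delta> * real K" using dpos by (simp add: divide_less_eq mult.commute)
  then have tK: "t / real K < \<delta> / 2" using K by (simp add: divide_less_eq field_simps)
  define r where "r k = t * real k / real K" for k
  have r_range: "k \<le> K \<Longrightarrow> 0 \<le> r k \<and> r k \<le> t" for k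
  proof -
    assume k: "k \<le> K"
    have "t * real k \<le> t * real K" using k t by (intro mult_left_mono) auto
    then show ?thesis using K t by (simp add: r_def pos_divide_le_eq)
  qed
  have r_step: "0 < k \<Longrightarrow> r (k - 1) = r k - t / real K" for k
    unfolding r_def by (simp add: of_nat_diff right_diff_distrib diff_divide_distrib)
  have r_mono: "0 < k \<Longrightarrow> r (k - 1) \<le> r k" for k
    using r_step[of k] t K by simp
  define S where "S n k = (\<Sum>j\<in>{1..<L n}. if q n (Suc j) \<le> r k then a n j else 0)" for n k
  have S_conv: "k \<le> K \<Longrightarrow> (\<lambda>n. S n k) \<longlonglongrightarrow> c * r k" for k
    using conv K unfolding S_def r_def by blast
  define T where "T n = (\<Sum>k\<le>K. g (r k) * (S n k - (if k = 0 then 0 else S n (k - 1))))" for n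
  define R where "R = (\<Sum>k\<le>K. g (r k) * (c * r k - (if k = 0 then 0 else c * r (k - 1))))"
  have "(\<lambda>n. S n k - (if k = 0 then 0 else S n (k - 1))) \<longlonglongrightarrow> c * r k - (if k = 0 then 0 else c * r (k - 1))"
    if "k \<le> K" for k
  proof (cases "k = 0")
    case True then show ?thesis using S_conv[of 0] by simp
  next
    case False then show ?thesis using S_conv[of k] S_conv[of "k - 1"] that
      by (simp add: tendsto_diff)
  qed
  then have "T \<longlonglongrightarrow> R" unfolding T_def R_def
    by (intro tendsto_sum tendsto_mult tendsto_const) auto
  then obtain n2 where n2: "\<forall>n\<ge>n2. norm (T n - R) < \<epsilon>" using epos LIMSEQ_D by blast
  obtain n1 where n1: "\<forall>n\<ge>n1. norm (h n - 0) < \<delta> / 2" using dpos LIMSEQ_D[OF h, of "\<delta>/2"] by auto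
  have R_eq: "R = c * (\<Sum>k\<in>{1..K}. g (r k) * (r k - r (k - 1)))"
  proof -
    have "{..K} = insert 0 {1..K}" by auto
    then have "R = g (r 0) * (c * r 0) + (\<Sum>k\<in>{1..K}. g (r k) * (c * r k - c * r (k - 1)))"
      unfolding R_def by (simp add: sum.insert)
    also have "\<dots> = c * (\<Sum>k\<in>{1..K}. g (r k) * (r k - r (k - 1)))"
      by (simp add: r_def sum_distrib_left algebra_simps)
    finally show ?thesis .
  qed
  have ucle: "\<forall>x\<in>{0..t}. \<forall>y\<in>{0..t}. \<bar>x - y\<bar> \<le> t / real K \<longrightarrow> \<bar>g x - g y\<bar> \<le> \<epsilon>"
  proof (intro ballI impI)
    fix x y assume xy: "x \<in> {0..t}" "y \<in> {0..t}" "\<bar>x - y\<bar> \<le> t / real K"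
    have "t / real K < \<delta>" using tK dpos by linarith
    then have "dist x y < \<delta>" using xy(3) by (simp add: dist_real_def)
    then show "\<bar>g x - g y\<bar> \<le> \<epsilon>" using uc[OF xy(2) xy(1)] by (simp add: dist_real_def)
  qed
  have RI: "\<bar>R - c * integral {0..t} g\<bar> \<le> \<bar>c\<bar> * (\<epsilon> * t)"
  proof -
    have "\<bar>(\<Sum>k\<in>{1..K}. g (r k) * (r k - r (k - 1))) - integral {0..t} g\<bar> \<le> \<epsilon> * t"
      using riemann_grid[OF g t K ucle] by (simp add: r_def)
    then have "\<bar>c\<bar> * \<bar>(\<Sum>k\<in>{1..K}. g (r k) * (r k - r (k - 1))) - integral {0..t} g\<bar> \<le> \<bar>c\<bar> * (\<epsilon> * t)"
      by (simp add: mult_left_mono)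
    then show ?thesis unfolding R_eq by (simp add: abs_mult[symmetric] right_diff_distrib)
  qed
  show "\<exists>no. \<forall>n\<ge>no. norm ((\<Sum>j\<in>{1..<L n}. g (q n j) * a n j) - c * integral {0..t} g) < e"
  proof (intro exI allI impI)
    fix n assume nn: "max n1 n2 \<le> n"
    define p where "p = q n"
    define J where "J = {1..<L n}"
    have Pn: "ispart p (L n) t (h n)" using P by (simp add: p_def)
    have hn: "h n < \<delta> / 2" using n1 nn by auto
    define I where "I k j = (if p (Suc j) \<le> r k then 1 else 0::real)" for k j
    define D where "D k j = I k j - (if k = 0 then 0 else I (k - 1) j)" for k j
    have fin: "finite J" by (simp add: J_def)
    have Dsum: "(\<Sum>k\<le>K. D k j) = 1" if j: "j \<in> J" for j
    proof -
      have "(\<Sum>k\<le>K. D k j) = I K j" unfolding D_def by (rule telescope_if)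
      moreover have "p (Suc j) \<le> t" using ispart_range[OF Pn, of "Suc j"] j by (simp add: J_def)
      ultimately show ?thesis using K by (simp add: I_def r_def)
    qed
    have Dprop: "0 \<le> D k j \<and> \<bar>(g (p j) - g (r k)) * D k j * a n j\<bar> \<le> \<epsilon> * (D k j * \<bar>a n j\<bar>)"
      if j: "j \<in> J" and k: "k \<le> K" for j k
    proof -
      have pj: "0 \<le> p j" "p j \<le> t" using ispart_range[OF Pn, of j] j by (auto simp: J_def)
      have pj1: "0 \<le> p (Suc j)" "p (Suc j) \<le> t" using ispart_range[OF Pn, of "Suc j"] j by (auto simp: J_def)
      have mono: "p j \<le> p (Suc j)" "p (Suc j) - p j \<le> h n" using Pn j unfolding ispart_def J_def by auto
      have rk: "0 \<le> r k" "r k \<le> t" using r_range[OF k] by auto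
      have D01: "D k j = 0 \<or> (D k j = 1 \<and> \<bar>g (p j) - g (r k)\<bar> < \<epsilon>)"
      proof (cases "k = 0")
        case True
        then show ?thesis
        proof (cases "p (Suc j) \<le> r 0")
          case True2: True
          then have "p j = r 0" using mono pj by (simp add: r_def)
          then show ?thesis using True True2 epos by (simp add: D_def I_def)
        next
          case False
          then show ?thesis using True by (simp add: D_def I_def)
        qed
      next
        case False
        have rs: "r (k - 1) = r k - t / real K" using r_step False by simp
        show ?thesis
        proof (cases "p (Suc j) \<le> r k \<and> \<not> p (Suc j) \<le> r (k - 1)")
          case True
          then have "dist (p j) (r k) < \<delta>" using rs mono hn tK by (simp add: dist_real_def abs_if)
          then have "dist (g (p j)) (g (r k)) < \<epsilon>" using uc[of "r k" "p j"] pj rk by auto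
          then show ?thesis using True False by (simp add: D_def I_def dist_real_def)
        next
          case False2: False
          have "r (k - 1) \<le> r k" using r_mono False by simp
          then show ?thesis using False False2 by (auto simp: D_def I_def)
        qed
      qed
      then show ?thesis
      proof
        assume "D k j = 0" then show ?thesis by simp
      next
        assume "D k j = 1 \<and> \<bar>g (p j) - g (r k)\<bar> < \<epsilon>"
        then show ?thesis by (simp add: abs_mult mult_right_mono)
      qed
    qed
    have Sn: "S n k = (\<Sum>j\<in>J. I k j * a n j)" for k
      unfolding S_def I_def J_def p_def by (intro sum.cong) auto
    have TD: "T n = (\<Sum>j\<in>J. \<Sum>k\<le>K. g (r k) * D k j * a n j)"
    proof -
      have "S n k - (if k = 0 then 0 else S n (k - 1)) = (\<Sum>j\<in>J. D k j * a n j)" for k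
        unfolding Sn D_def by (cases "k = 0") (simp_all add: left_diff_distrib sum_subtractf)
      then have "T n = (\<Sum>k\<le>K. g (r k) * (\<Sum>j\<in>J. D k j * a n j))" unfolding T_def by simp
      also have "\<dots> = (\<Sum>k\<le>K. \<Sum>j\<in>J. g (r k) * D k j * a n j)"
        by (simp add: sum_distrib_left mult.assoc)
      also have "\<dots> = (\<Sum>j\<in>J. \<Sum>k\<le>K. g (r k) * D k j * a n j)" by (rule sum.swap)
      finally show ?thesis .
    qed
    have GD: "(\<Sum>j\<in>J. g (p j) * a n j) = (\<Sum>j\<in>J. \<Sum>k\<le>K. g (p j) * D k j * a n j)"
    proof (intro sum.cong refl)
      fix j assume j: "j \<in> J"
      have "(\<Sum>k\<le>K. g (p j) * D k j * a n j) = g (p j) * (\<Sum>k\<le>K. D k j) * a n j"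
        by (simp add: sum_distrib_left sum_distrib_right)
      then show "g (p j) * a n j = (\<Sum>k\<le>K. g (p j) * D k j * a n j)" using Dsum[OF j] by simp
    qed
    have diff: "\<bar>(\<Sum>j\<in>J. g (p j) * a n j) - T n\<bar> \<le> \<epsilon> * C'"
    proof -
      have "(\<Sum>j\<in>J. g (p j) * a n j) - T n = (\<Sum>j\<in>J. \<Sum>k\<le>K. (g (p j) - g (r k)) * D k j * a n j)"
        unfolding GD TD by (simp add: sum_subtractf[symmetric] algebra_simps)
      also have "\<bar>\<dots>\<bar> \<le> (\<Sum>j\<in>J. \<Sum>k\<le>K. \<bar>(g (p j) - g (r k)) * D k j * a n j\<bar>)"
        by (rule order_trans[OF sum_abs sum_mono]) (rule sum_abs)
      also have "\<dots> \<le> (\<Sum>j\<in>J. \<Sum>k\<le>K. \<epsilon> * (D k j * \<bar>a n j\<bar>))"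
        using Dprop by (intro sum_mono) auto
      also have "\<dots> = \<epsilon> * (\<Sum>j\<in>J. (\<Sum>k\<le>K. D k j) * \<bar>a n j\<bar>)"
        by (simp add: sum_distrib_left sum_distrib_right)
      also have "\<dots> = \<epsilon> * (\<Sum>j\<in>J. \<bar>a n j\<bar>)"
        using Dsum by simp
      also have "\<dots> \<le> \<epsilon> * C'"
        using C[rule_format, of n] epos by (intro mult_left_mono) (auto simp: J_def C'_def)
      finally show ?thesis .
    qed
    have TR: "\<bar>T n - R\<bar> < \<epsilon>" using n2 nn by auto
    have "\<bar>(\<Sum>j\<in>J. g (p j) * a n j) - c * integral {0..t} g\<bar> \<le> \<epsilon> * C' + \<epsilon> + \<bar>c\<bar> * (\<epsilon> * t)"
      using diff TR RI by linarith
    also have "\<dots> = e / 2" using eq_e by (simp add: algebra_simps)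
    also have "\<dots> < e" using e by simp
    finally show "norm ((\<Sum>j\<in>{1..<L n}. g (q n j) * a n j) - c * integral {0..t} g) < e"
      by (simp add: J_def p_def)
  qed
qed


lemma ispart_tele:
  assumes P: "ispart p L t h" and h0: "0 \<le> h" and r: "0 \<le> r" "r \<le> t"
  shows "\<bar>(\<Sum>j\<in>{1..<L}. if p (Suc j) \<le> r then p (Suc j) - p j else 0) - r\<bar> \<le> h"
proof -
  define F where "F L' = (\<Sum>j\<in>{1..<L'}. if p (Suc j) \<le> r then p (Suc j) - p j else 0)" for L'
  have L1: "1 \<le> L" and p1: "p 1 = 0" and pL: "p L = t" using P unfolding ispart_def by auto
  have inv: "L' \<le> L \<Longrightarrow> (p L' \<le> r \<longrightarrow> F L' = p L') \<and> (\<not> p L' \<le> r \<longrightarrow> r - h \<le> F L' \<and> F L' \<le> r)"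
    if "1 \<le> L'" for L'
    using that
  proof (induction L' rule: dec_induct)
    case base
    then show ?case using p1 r by (simp add: F_def)
  next
    case (step k)
    have stp: "p k \<le> p (Suc k)" "p (Suc k) - p k \<le> h"
      using P step.hyps step.prems unfolding ispart_def by auto
    have IH: "(p k \<le> r \<longrightarrow> F k = p k) \<and> (\<not> p k \<le> r \<longrightarrow> r - h \<le> F k \<and> F k \<le> r)"
      using step by simp
    have FS: "F (Suc k) = F k + (if p (Suc k) \<le> r then p (Suc k) - p k else 0)"
      unfolding F_def using step.hyps by simp
    show ?case using IH FS stp by auto
  qed
  have "(p L \<le> r \<longrightarrow> F L = p L) \<and> (\<not> p L \<le> r \<longrightarrow> r - h \<le> F L \<and> F L \<le> r)"
    using inv[OF L1] by simp
  then show ?thesis using pL r h0 unfolding F_def[symmetric] by (cases "t \<le> r") auto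
qed

lemma small_incr:
  fixes f :: "real \<Rightarrow> real"
  assumes P: "\<forall>n. ispart (q n) (L n) t (h n)" and h: "h \<longlonglongrightarrow> 0"
    and f: "continuous_on {0..t} f" and e: "0 < \<epsilon>"
  shows "eventually (\<lambda>n. \<forall>j\<in>{1..<L n}. \<bar>f (q n (Suc j)) - f (q n j)\<bar> < \<epsilon>) sequentially"
proof -
  have "uniformly_continuous_on {0..t} f" by (rule compact_uniformly_continuous[OF f compact_Icc])
  then obtain \<delta> where dpos: "\<delta> > 0"
      and uc: "\<And>x y. x\<in>{0..t} \<Longrightarrow> y\<in>{0..t} \<Longrightarrow> dist y x < \<delta> \<Longrightarrow> dist (f y) (f x) < \<epsilon>"
    unfolding uniformly_continuous_on_def using e by metis
  obtain n1 where n1: "\<forall>n\<ge>n1. norm (h n - 0) < \<delta>" using dpos LIMSEQ_D[OF h] by blast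
  show ?thesis
  proof (rule eventually_sequentiallyI[of n1], intro ballI)
    fix n j assume n: "n1 \<le> n" and j: "j \<in> {1..<L n}"
    have Pn: "ispart (q n) (L n) t (h n)" using P by simp
    have a: "q n j \<in> {0..t}" using ispart_range[OF Pn, of j] j by auto
    have b: "q n (Suc j) \<in> {0..t}" using ispart_range[OF Pn, of "Suc j"] j by auto
    have "q n j \<le> q n (Suc j)" "q n (Suc j) - q n j \<le> h n" using Pn j unfolding ispart_def by auto
    then have "dist (q n (Suc j)) (q n j) < \<delta>" using n1 n by (auto simp: dist_real_def)
    then show "\<bar>f (q n (Suc j)) - f (q n j)\<bar> < \<epsilon>" using uc[OF a b] by (simp add: dist_real_def)
  qed
qed

lemma bv_sum:
  assumes "bounded_variation_on f 0 t"
  shows "\<exists>V. \<forall>p L h. ispart p L t h \<longrightarrow> (\<Sum>j\<in>{1..<L}. \<bar>f (p (Suc j)) - f (p j)\<bar>) \<le> V"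
proof -
  obtain B where B: "\<And>(p::nat \<Rightarrow> real) k. p 0 = 0 \<Longrightarrow> p k = t \<Longrightarrow> (\<forall>j<k. p j \<le> p (Suc j)) \<Longrightarrow>
        (\<Sum>j<k. \<bar>f (p (Suc j)) - f (p j)\<bar>) \<le> B"
    using assms unfolding bounded_variation_on_def by blast
  show ?thesis
  proof (intro exI allI impI)
    fix p L h assume P: "ispart p L t h"
    then have L1: "1 \<le> L" and p1: "p 1 = 0" and pL: "p L = t" unfolding ispart_def by auto
    define L' where "L' = L - 1"
    have LL: "L = Suc L'" using L1 by (simp add: L'_def)
    have "(\<Sum>j\<in>{1..<L}. \<bar>f (p (Suc j)) - f (p j)\<bar>) = (\<Sum>j<L'. \<bar>f (p (Suc (Suc j))) - f (p (Suc j))\<bar>)"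
      unfolding LL One_nat_def sum.shift_bounds_Suc_ivl by (simp add: lessThan_atLeast0)
    also have "\<dots> \<le> B"
      apply (rule B[of "\<lambda>j. p (Suc j)" L'])
      using p1 pL LL P unfolding ispart_def by auto
    finally show "(\<Sum>j\<in>{1..<L}. \<bar>f (p (Suc j)) - f (p j)\<bar>) \<le> B" .
  qed
qed

lemma sumsq_to_0:
  fixes b :: "nat \<Rightarrow> nat \<Rightarrow> real"
  assumes small: "\<And>\<epsilon>. 0 < \<epsilon> \<Longrightarrow> eventually (\<lambda>n. \<forall>j\<in>{1..<L n}. \<bar>b n j\<bar> \<le> \<epsilon>) sequentially"
    and V: "\<forall>n. (\<Sum>j\<in>{1..<L n}. \<bar>b n j\<bar>) \<le> V"
  shows "(\<lambda>n. \<Sum>j\<in>{1..<L n}. (b n j)\<^sup>2) \<longlonglongrightarrow> 0"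
proof (rule LIMSEQ_I)
  fix e :: real assume e: "0 < e"
  define \<epsilon> where "\<epsilon> = e / (\<bar>V\<bar> + 1)"
  have ep: "0 < \<epsilon>" using e by (simp add: \<epsilon>_def add_nonneg_pos)
  have epV: "\<epsilon> * \<bar>V\<bar> < e"
  proof -
    have "\<epsilon> * \<bar>V\<bar> < \<epsilon> * (\<bar>V\<bar> + 1)" using ep by simp
    also have "\<dots> = e" by (simp add: \<epsilon>_def add_nonneg_pos)
    finally show ?thesis .
  qed
  obtain n0 where n0: "\<And>n. n \<ge> n0 \<Longrightarrow> \<forall>j\<in>{1..<L n}. \<bar>b n j\<bar> \<le> \<epsilon>"
    using small[OF ep] unfolding eventually_sequentially by blast
  show "\<exists>no. \<forall>n\<ge>no. norm ((\<Sum>j\<in>{1..<L n}. (b n j)\<^sup>2) - 0) < e"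
  proof (intro exI allI impI)
    fix n assume n: "n0 \<le> n"
    have "(\<Sum>j\<in>{1..<L n}. (b n j)\<^sup>2) \<le> (\<Sum>j\<in>{1..<L n}. \<epsilon> * \<bar>b n j\<bar>)"
    proof (intro sum_mono)
      fix j assume "j \<in> {1..<L n}"
      then have "\<bar>b n j\<bar> \<le> \<epsilon>" using n0[OF n] by blast
      then have "\<bar>b n j\<bar> * \<bar>b n j\<bar> \<le> \<epsilon> * \<bar>b n j\<bar>" by (rule mult_right_mono) auto
      moreover have "(b n j)\<^sup>2 = \<bar>b n j\<bar> * \<bar>b n j\<bar>" by (simp add: power2_eq_square abs_mult[symmetric])
      ultimately show "(b n j)\<^sup>2 \<le> \<epsilon> * \<bar>b n j\<bar>" by simp
    qed
    also have "\<dots> = \<epsilon> * (\<Sum>j\<in>{1..<L n}. \<bar>b n j\<bar>)" by (simp add: sum_distrib_left)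
    also have "\<dots> \<le> \<epsilon> * \<bar>V\<bar>" using V ep by (intro mult_left_mono) (auto intro: order_trans[OF _ abs_ge_self])
    finally have "(\<Sum>j\<in>{1..<L n}. (b n j)\<^sup>2) < e" using epV by linarith
    moreover have "0 \<le> (\<Sum>j\<in>{1..<L n}. (b n j)\<^sup>2)" by (intro sum_nonneg) simp
    ultimately show "norm ((\<Sum>j\<in>{1..<L n}. (b n j)\<^sup>2) - 0) < e" by simp
  qed
qed

lemma cont_bound:
  fixes f :: "real \<Rightarrow> real"
  assumes "continuous_on {0..t} f"
  shows "\<exists>B>0. \<forall>x\<in>{0..t}. \<bar>f x\<bar> \<le> B"
proof -
  have "compact (f ` {0..t})" by (rule compact_continuous_image[OF assms compact_Icc])
  then have "bounded (f ` {0..t})" by (rule compact_imp_bounded)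
  then show ?thesis unfolding bounded_pos by auto
qed

lemma abs_prod_le: "2 * \<bar>(a::real) * b\<bar> \<le> a\<^sup>2 + b\<^sup>2"
proof -
  have "0 \<le> (\<bar>a\<bar> - \<bar>b\<bar>)\<^sup>2" by simp
  then show ?thesis by (simp add: power2_eq_square abs_mult algebra_simps)
qed


lemma det_main:
  fixes q :: "nat \<Rightarrow> nat \<Rightarrow> real" and L :: "nat \<Rightarrow> nat" and h :: "nat \<Rightarrow> real"
    and w y :: "nat \<Rightarrow> real \<Rightarrow> real" and x Z :: "real \<Rightarrow> real"
  assumes P: "\<forall>n. ispart (q n) (L n) t (h n)" and h: "h \<longlonglongrightarrow> 0"
    and wc: "\<forall>i\<in>{1..N}. continuous_on {0..t} (w i)"
    and qv: "\<forall>i\<in>{1..N}. \<forall>k\<in>{1..N}. \<forall>K kk. 0 < K \<longrightarrow> kk \<le> K \<longrightarrow>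
       (\<lambda>n. \<Sum>j\<in>{1..<L n}. if q n (Suc j) \<le> t * real kk / real K
            then (w i (q n (Suc j)) - w i (q n j)) * (w k (q n (Suc j)) - w k (q n j)) else 0)
         \<longlonglongrightarrow> (if i = k then 1 else 0) * (t * real kk / real K)"
    and xc: "continuous_on {0..t} x" and xbv: "bounded_variation_on x 0 t"
    and yc: "\<forall>i\<in>{1..N}. continuous_on {0..t} (y i)"
    and ybv: "\<forall>i\<in>{1..N}. bounded_variation_on (y i) 0 t"
    and Z: "\<And>r. Z r = x r + (\<Sum>i=1..N. y i r * w i r)"
  shows "(\<lambda>n. \<Sum>j\<in>{1..<L n}. (Z (q n (Suc j)) - Z (q n j))\<^sup>2)
           \<longlonglongrightarrow> (\<Sum>i=1..N. integral {0..t} (\<lambda>r. (y i r)\<^sup>2))"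
proof -
  define dw where "dw i n j = w i (q n (Suc j)) - w i (q n j)" for i n j
  define A where "A n j = (\<Sum>i=1..N. y i (q n j) * dw i n j)" for n j
  define B where "B n j = (x (q n (Suc j)) - x (q n j)) +
      (\<Sum>i=1..N. w i (q n (Suc j)) * (y i (q n (Suc j)) - y i (q n j)))" for n j
  have ZAB: "Z (q n (Suc j)) - Z (q n j) = A n j + B n j" for n j
  proof -
    have "(\<Sum>i=1..N. y i (q n (Suc j)) * w i (q n (Suc j))) - (\<Sum>i=1..N. y i (q n j) * w i (q n j))
       = (\<Sum>i=1..N. y i (q n j) * dw i n j + w i (q n (Suc j)) * (y i (q n (Suc j)) - y i (q n j)))"
      unfolding sum_subtractf[symmetric] dw_def by (intro sum.cong) (auto simp: algebra_simps)
    then show ?thesis unfolding Z A_def B_def sum.distrib by linarith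
  qed
  have full: "(\<lambda>n. \<Sum>j\<in>{1..<L n}. dw i n j * dw k n j) \<longlonglongrightarrow> (if i = k then 1 else 0) * t"
    if i: "i \<in> {1..N}" and k: "k \<in> {1..N}" for i k
  proof -
    have "(\<lambda>n. \<Sum>j\<in>{1..<L n}. if q n (Suc j) \<le> t * real 1 / real 1
            then (w i (q n (Suc j)) - w i (q n j)) * (w k (q n (Suc j)) - w k (q n j)) else 0)
         \<longlonglongrightarrow> (if i = k then 1 else 0) * (t * real 1 / real 1)"
      using qv[rule_format, OF i k, of 1 1] by simp
    moreover have "(\<Sum>j\<in>{1..<L n}. if q n (Suc j) \<le> t * real 1 / real 1
            then (w i (q n (Suc j)) - w i (q n j)) * (w k (q n (Suc j)) - w k (q n j)) else 0)
        = (\<Sum>j\<in>{1..<L n}. dw i n j * dw k n j)" for n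
    proof (intro sum.cong refl)
      fix j assume j: "j \<in> {1..<L n}"
      have "q n (Suc j) \<le> t" using ispart_range[of "q n" "L n" t "h n" "Suc j"] P j by auto
      then show "(if q n (Suc j) \<le> t * real 1 / real 1
            then (w i (q n (Suc j)) - w i (q n j)) * (w k (q n (Suc j)) - w k (q n j)) else 0)
          = dw i n j * dw k n j" by (simp add: dw_def)
    qed
    ultimately show ?thesis by simp
  qed
  have "\<exists>Bi. \<forall>n. (\<Sum>j\<in>{1..<L n}. (dw i n j)\<^sup>2) \<le> Bi" if i: "i \<in> {1..N}" for i
  proof -
    have "convergent (\<lambda>n. \<Sum>j\<in>{1..<L n}. dw i n j * dw i n j)"
      using full[OF i i] unfolding convergent_def by blast
    then have "Bseq (\<lambda>n. \<Sum>j\<in>{1..<L n}. dw i n j * dw i n j)" by (rule convergent_imp_Bseq)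
    then obtain K where "\<forall>n. norm (\<Sum>j\<in>{1..<L n}. dw i n j * dw i n j) \<le> K" by (auto elim: BseqE)
    then show ?thesis by (auto simp: power2_eq_square intro: order_trans[OF abs_ge_self])
  qed
  then obtain QB where QB: "\<And>i n. i \<in> {1..N} \<Longrightarrow> (\<Sum>j\<in>{1..<L n}. (dw i n j)\<^sup>2) \<le> QB i"
    by metis
  have wcov: "(\<lambda>n. \<Sum>j\<in>{1..<L n}. (y i (q n j) * y k (q n j)) * (dw i n j * dw k n j))
      \<longlonglongrightarrow> (if i = k then 1 else 0) * integral {0..t} (\<lambda>r. y i r * y k r)"
    if i: "i \<in> {1..N}" and k: "k \<in> {1..N}" for i k
  proof (rule weighted_riemann[OF P h])
    show "continuous_on {0..t} (\<lambda>r. y i r * y k r)"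
      using yc i k by (intro continuous_intros) auto
    show "\<forall>n. (\<Sum>j\<in>{1..<L n}. \<bar>dw i n j * dw k n j\<bar>) \<le> (QB i + QB k) / 2"
    proof
      fix n
      have "(\<Sum>j\<in>{1..<L n}. \<bar>dw i n j * dw k n j\<bar>) \<le> (\<Sum>j\<in>{1..<L n}. ((dw i n j)\<^sup>2 + (dw k n j)\<^sup>2) / 2)"
        using abs_prod_le by (intro sum_mono) (simp add: field_simps)
      also have "\<dots> = ((\<Sum>j\<in>{1..<L n}. (dw i n j)\<^sup>2) + (\<Sum>j\<in>{1..<L n}. (dw k n j)\<^sup>2)) / 2"
        by (simp only: sum_divide_distrib[symmetric] sum.distrib)
      also have "\<dots> \<le> (QB i + QB k) / 2" using QB[OF i, of n] QB[OF k, of n] by simp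
      finally show "(\<Sum>j\<in>{1..<L n}. \<bar>dw i n j * dw k n j\<bar>) \<le> (QB i + QB k) / 2" .
    qed
    show "\<forall>K kk. 0 < K \<longrightarrow> kk \<le> K \<longrightarrow>
       (\<lambda>n. \<Sum>j\<in>{1..<L n}. if q n (Suc j) \<le> t * real kk / real K then dw i n j * dw k n j else 0)
         \<longlonglongrightarrow> (if i = k then 1 else 0) * (t * real kk / real K)"
      unfolding dw_def using qv[rule_format, OF i k] by blast
  qed
  have Asq: "(\<Sum>j\<in>{1..<L n}. (A n j)\<^sup>2) =
      (\<Sum>i=1..N. \<Sum>k=1..N. \<Sum>j\<in>{1..<L n}. (y i (q n j) * y k (q n j)) * (dw i n j * dw k n j))" for n
  proof -
    have "(A n j)\<^sup>2 = (\<Sum>i=1..N. \<Sum>k=1..N. (y i (q n j) * y k (q n j)) * (dw i n j * dw k n j))" for j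
      unfolding A_def power2_eq_square sum_product by (intro sum.cong refl) (simp add: mult_ac)
    then have "(\<Sum>j\<in>{1..<L n}. (A n j)\<^sup>2) =
      (\<Sum>j\<in>{1..<L n}. \<Sum>i=1..N. \<Sum>k=1..N. (y i (q n j) * y k (q n j)) * (dw i n j * dw k n j))" by simp
    also have "\<dots> = (\<Sum>i=1..N. \<Sum>j\<in>{1..<L n}. \<Sum>k=1..N. (y i (q n j) * y k (q n j)) * (dw i n j * dw k n j))"
      by (rule sum.swap)
    also have "\<dots> = (\<Sum>i=1..N. \<Sum>k=1..N. \<Sum>j\<in>{1..<L n}. (y i (q n j) * y k (q n j)) * (dw i n j * dw k n j))"
      by (intro sum.cong refl sum.swap)
    finally show ?thesis .
  qed
  have "(\<lambda>n. \<Sum>i=1..N. \<Sum>k=1..N. \<Sum>j\<in>{1..<L n}. (y i (q n j) * y k (q n j)) * (dw i n j * dw k n j))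
     \<longlonglongrightarrow> (\<Sum>i=1..N. \<Sum>k=1..N. (if i = k then 1 else 0) * integral {0..t} (\<lambda>r. y i r * y k r))"
    by (intro tendsto_sum wcov) auto
  moreover have "(\<Sum>i=1..N. \<Sum>k=1..N. (if i = k then 1 else 0) * integral {0..t} (\<lambda>r. y i r * y k r))
      = (\<Sum>i=1..N. integral {0..t} (\<lambda>r. (y i r)\<^sup>2))"
  proof (intro sum.cong refl)
    fix i assume i: "i \<in> {1..N}"
    have "(\<Sum>k=1..N. (if i = k then 1 else 0) * integral {0..t} (\<lambda>r. y i r * y k r))
        = (\<Sum>k=1..N. if i = k then integral {0..t} (\<lambda>r. y i r * y k r) else 0)"
      by (intro sum.cong) auto
    also have "\<dots> = integral {0..t} (\<lambda>r. y i r * y i r)" using i by (simp add: sum.delta)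
    finally show "(\<Sum>k=1..N. (if i = k then 1 else 0) * integral {0..t} (\<lambda>r. y i r * y k r))
        = integral {0..t} (\<lambda>r. (y i r)\<^sup>2)" by (simp add: power2_eq_square)
  qed
  ultimately have Alim: "(\<lambda>n. \<Sum>j\<in>{1..<L n}. (A n j)\<^sup>2) \<longlonglongrightarrow> (\<Sum>i=1..N. integral {0..t} (\<lambda>r. (y i r)\<^sup>2))"
    unfolding Asq by simp
  have "\<exists>M>0. \<forall>r\<in>{0..t}. \<bar>w i r\<bar> \<le> M" if "i \<in> {1..N}" for i
    using cont_bound wc that by blast
  then obtain Mw where Mw: "\<And>i. i \<in> {1..N} \<Longrightarrow> 0 < Mw i \<and> (\<forall>r\<in>{0..t}. \<bar>w i r\<bar> \<le> Mw i)"
    by metis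
  obtain Vx where Vx: "\<And>p L h. ispart p L t h \<Longrightarrow> (\<Sum>j\<in>{1..<L}. \<bar>x (p (Suc j)) - x (p j)\<bar>) \<le> Vx"
    using bv_sum[OF xbv] by blast
  have "\<exists>V. \<forall>p L h. ispart p L t h \<longrightarrow> (\<Sum>j\<in>{1..<L}. \<bar>y i (p (Suc j)) - y i (p j)\<bar>) \<le> V"
    if "i \<in> {1..N}" for i using bv_sum ybv that by blast
  then obtain Vy where Vy: "\<And>i p L h. i \<in> {1..N} \<Longrightarrow> ispart p L t h \<Longrightarrow>
      (\<Sum>j\<in>{1..<L}. \<bar>y i (p (Suc j)) - y i (p j)\<bar>) \<le> Vy i"
    by metis
  have Bbound: "\<bar>B n j\<bar> \<le> \<bar>x (q n (Suc j)) - x (q n j)\<bar> + (\<Sum>i=1..N. Mw i * \<bar>y i (q n (Suc j)) - y i (q n j)\<bar>)"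
    if j: "j \<in> {1..<L n}" for n j
  proof -
    have Pn: "ispart (q n) (L n) t (h n)" using P by simp
    have qr: "q n (Suc j) \<in> {0..t}" using ispart_range[OF Pn, of "Suc j"] j by auto
    have "\<bar>B n j\<bar> \<le> \<bar>x (q n (Suc j)) - x (q n j)\<bar> +
        \<bar>\<Sum>i=1..N. w i (q n (Suc j)) * (y i (q n (Suc j)) - y i (q n j))\<bar>"
      unfolding B_def by (rule abs_triangle_ineq)
    also have "\<bar>\<Sum>i=1..N. w i (q n (Suc j)) * (y i (q n (Suc j)) - y i (q n j))\<bar>
        \<le> (\<Sum>i=1..N. \<bar>w i (q n (Suc j)) * (y i (q n (Suc j)) - y i (q n j))\<bar>)" by (rule sum_abs)
    also have "\<dots> \<le> (\<Sum>i=1..N. Mw i * \<bar>y i (q n (Suc j)) - y i (q n j)\<bar>)"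
    proof (intro sum_mono)
      fix i assume i: "i \<in> {1..N}"
      show "\<bar>w i (q n (Suc j)) * (y i (q n (Suc j)) - y i (q n j))\<bar> \<le> Mw i * \<bar>y i (q n (Suc j)) - y i (q n j)\<bar>"
        unfolding abs_mult using Mw[OF i] qr by (intro mult_right_mono) auto
    qed
    finally show ?thesis by simp
  qed
  have Blim: "(\<lambda>n. \<Sum>j\<in>{1..<L n}. (B n j)\<^sup>2) \<longlonglongrightarrow> 0"
  proof (rule sumsq_to_0)
    fix \<epsilon> :: real assume e: "0 < \<epsilon>"
    define MW where "MW = 1 + (\<Sum>i=1..N. Mw i)"
    have MWpos: "0 < MW" unfolding MW_def using Mw by (intro add_pos_nonneg sum_nonneg) (auto intro: less_imp_le)
    define e' where "e' = \<epsilon> / MW"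
    have e': "0 < e'" using e MWpos by (simp add: e'_def)
    have ev1: "eventually (\<lambda>n. \<forall>j\<in>{1..<L n}. \<bar>x (q n (Suc j)) - x (q n j)\<bar> < e') sequentially"
      by (rule small_incr[OF P h xc e'])
    have ev2: "eventually (\<lambda>n. \<forall>i\<in>{1..N}. \<forall>j\<in>{1..<L n}. \<bar>y i (q n (Suc j)) - y i (q n j)\<bar> < e') sequentially"
      using small_incr[OF P h _ e'] yc by (intro eventually_ball_finite) auto
    show "eventually (\<lambda>n. \<forall>j\<in>{1..<L n}. \<bar>B n j\<bar> \<le> \<epsilon>) sequentially"
      using ev1 ev2
    proof eventually_elim
      case (elim n)
      show ?case
      proof
        fix j assume j: "j \<in> {1..<L n}"
        have "\<bar>B n j\<bar> \<le> \<bar>x (q n (Suc j)) - x (q n j)\<bar> + (\<Sum>i=1..N. Mw i * \<bar>y i (q n (Suc j)) - y i (q n j)\<bar>)"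
          by (rule Bbound[OF j])
        also have "\<dots> \<le> e' + (\<Sum>i=1..N. Mw i * e')"
        proof (intro add_mono sum_mono)
          have "\<bar>x (q n (Suc j)) - x (q n j)\<bar> < e'" using elim(1) j by blast
          then show "\<bar>x (q n (Suc j)) - x (q n j)\<bar> \<le> e'" by simp
        next
          fix i assume i: "i \<in> {1..N}"
          show "Mw i * \<bar>y i (q n (Suc j)) - y i (q n j)\<bar> \<le> Mw i * e'"
          proof (rule mult_left_mono)
            have "\<bar>y i (q n (Suc j)) - y i (q n j)\<bar> < e'" using elim(2) i j by blast
            then show "\<bar>y i (q n (Suc j)) - y i (q n j)\<bar> \<le> e'" by simp
            show "0 \<le> Mw i" using Mw[OF i] by simp
          qed
        qed
        also have "\<dots> = e' * MW" by (simp add: MW_def sum_distrib_left mult.commute distrib_left)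
        also have "\<dots> = \<epsilon>" using MWpos by (simp add: e'_def)
        finally show "\<bar>B n j\<bar> \<le> \<epsilon>" .
      qed
    qed
  next
    show "\<forall>n. (\<Sum>j\<in>{1..<L n}. \<bar>B n j\<bar>) \<le> Vx + (\<Sum>i=1..N. Mw i * Vy i)"
    proof
      fix n
      have Pn: "ispart (q n) (L n) t (h n)" using P by simp
      have "(\<Sum>j\<in>{1..<L n}. \<bar>B n j\<bar>) \<le> (\<Sum>j\<in>{1..<L n}. \<bar>x (q n (Suc j)) - x (q n j)\<bar> + (\<Sum>i=1..N. Mw i * \<bar>y i (q n (Suc j)) - y i (q n j)\<bar>))"
        using Bbound by (intro sum_mono) auto
      also have "\<dots> = (\<Sum>j\<in>{1..<L n}. \<bar>x (q n (Suc j)) - x (q n j)\<bar>) + (\<Sum>j\<in>{1..<L n}. \<Sum>i=1..N. Mw i * \<bar>y i (q n (Suc j)) - y i (q n j)\<bar>)"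
        by (rule sum.distrib)
      also have "\<dots> = (\<Sum>j\<in>{1..<L n}. \<bar>x (q n (Suc j)) - x (q n j)\<bar>) + (\<Sum>i=1..N. \<Sum>j\<in>{1..<L n}. Mw i * \<bar>y i (q n (Suc j)) - y i (q n j)\<bar>)"
        by (subst sum.swap) (rule refl)
      also have "\<dots> = (\<Sum>j\<in>{1..<L n}. \<bar>x (q n (Suc j)) - x (q n j)\<bar>) + (\<Sum>i=1..N. Mw i * (\<Sum>j\<in>{1..<L n}. \<bar>y i (q n (Suc j)) - y i (q n j)\<bar>))"
        by (simp add: sum_distrib_left)
      also have "\<dots> \<le> Vx + (\<Sum>i=1..N. Mw i * Vy i)"
      proof (intro add_mono sum_mono)
        show "(\<Sum>j\<in>{1..<L n}. \<bar>x (q n (Suc j)) - x (q n j)\<bar>) \<le> Vx" by (rule Vx[OF Pn])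
      next
        fix i assume i: "i \<in> {1..N}"
        show "Mw i * (\<Sum>j\<in>{1..<L n}. \<bar>y i (q n (Suc j)) - y i (q n j)\<bar>) \<le> Mw i * Vy i"
          using Vy[OF i Pn] Mw[OF i] by (intro mult_left_mono) auto
      qed
      finally show "(\<Sum>j\<in>{1..<L n}. \<bar>B n j\<bar>) \<le> Vx + (\<Sum>i=1..N. Mw i * Vy i)" .
    qed
  qed
  have ABlim: "(\<lambda>n. \<Sum>j\<in>{1..<L n}. A n j * B n j) \<longlonglongrightarrow> 0"
  proof (rule Lim_null_comparison)
    show "eventually (\<lambda>n. norm (\<Sum>j\<in>{1..<L n}. A n j * B n j) \<le>
        sqrt ((\<Sum>j\<in>{1..<L n}. (A n j)\<^sup>2) * (\<Sum>j\<in>{1..<L n}. (B n j)\<^sup>2))) sequentially"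
    proof (rule always_eventually, rule allI)
      fix n
      have "(\<Sum>j\<in>{1..<L n}. A n j * B n j)\<^sup>2 \<le> (\<Sum>j\<in>{1..<L n}. (A n j)\<^sup>2) * (\<Sum>j\<in>{1..<L n}. (B n j)\<^sup>2)"
        by (rule Cauchy_Schwarz_ineq_sum)
      then have "sqrt ((\<Sum>j\<in>{1..<L n}. A n j * B n j)\<^sup>2) \<le> sqrt ((\<Sum>j\<in>{1..<L n}. (A n j)\<^sup>2) * (\<Sum>j\<in>{1..<L n}. (B n j)\<^sup>2))"
        by (rule real_sqrt_le_mono)
      then show "norm (\<Sum>j\<in>{1..<L n}. A n j * B n j) \<le> sqrt ((\<Sum>j\<in>{1..<L n}. (A n j)\<^sup>2) * (\<Sum>j\<in>{1..<L n}. (B n j)\<^sup>2))"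
        by simp
    qed
    have "(\<lambda>n. sqrt ((\<Sum>j\<in>{1..<L n}. (A n j)\<^sup>2) * (\<Sum>j\<in>{1..<L n}. (B n j)\<^sup>2)))
       \<longlonglongrightarrow> sqrt ((\<Sum>i=1..N. integral {0..t} (\<lambda>r. (y i r)\<^sup>2)) * 0)"
      by (intro tendsto_real_sqrt tendsto_mult Alim Blim)
    then show "(\<lambda>n. sqrt ((\<Sum>j\<in>{1..<L n}. (A n j)\<^sup>2) * (\<Sum>j\<in>{1..<L n}. (B n j)\<^sup>2))) \<longlonglongrightarrow> 0"
      by simp
  qed
  have eq: "(\<Sum>j\<in>{1..<L n}. (Z (q n (Suc j)) - Z (q n j))\<^sup>2)
      = (\<Sum>j\<in>{1..<L n}. (A n j)\<^sup>2) + 2 * (\<Sum>j\<in>{1..<L n}. A n j * B n j) + (\<Sum>j\<in>{1..<L n}. (B n j)\<^sup>2)" for n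
  proof -
    have "(\<Sum>j\<in>{1..<L n}. (A n j + B n j)\<^sup>2) = (\<Sum>j\<in>{1..<L n}. (A n j)\<^sup>2 + 2 * (A n j * B n j) + (B n j)\<^sup>2)"
      by (intro sum.cong refl) (simp add: power2_sum)
    also have "\<dots> = (\<Sum>j\<in>{1..<L n}. (A n j)\<^sup>2) + (\<Sum>j\<in>{1..<L n}. 2 * (A n j * B n j)) + (\<Sum>j\<in>{1..<L n}. (B n j)\<^sup>2)"
      by (simp only: sum.distrib)
    finally show ?thesis unfolding ZAB by (simp add: sum_distrib_left)
  qed
  have "(\<lambda>n. (\<Sum>j\<in>{1..<L n}. (A n j)\<^sup>2) + 2 * (\<Sum>j\<in>{1..<L n}. A n j * B n j) + (\<Sum>j\<in>{1..<L n}. (B n j)\<^sup>2))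
     \<longlonglongrightarrow> (\<Sum>i=1..N. integral {0..t} (\<lambda>r. (y i r)\<^sup>2)) + 2 * 0 + 0"
    by (intro tendsto_add tendsto_mult tendsto_const Alim ABlim Blim)
  then show ?thesis unfolding eq by simp
qed


lemma as_conv:
  fixes S :: "nat \<Rightarrow> 'a \<Rightarrow> real"
  assumes meas: "\<And>n. S n \<in> borel_measurable M"
    and int: "\<And>n. integrable M (\<lambda>x. (S n x)\<^sup>2)"
    and summ: "summable (\<lambda>n. integral\<^sup>L M (\<lambda>x. (S n x)\<^sup>2))"
  shows "AE x in M. (\<lambda>n. S n x) \<longlonglongrightarrow> 0"
proof -
  have "(\<integral>\<^sup>+ x. (\<Sum>n. ennreal ((S n x)\<^sup>2)) \<partial>M) = (\<Sum>n. \<integral>\<^sup>+ x. ennreal ((S n x)\<^sup>2) \<partial>M)"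
    by (rule nn_integral_suminf) (use meas in auto)
  also have "\<dots> = (\<Sum>n. ennreal (integral\<^sup>L M (\<lambda>x. (S n x)\<^sup>2)))"
    by (intro arg_cong[where f=suminf] ext nn_integral_eq_integral int) auto
  also have "\<dots> = ennreal (\<Sum>n. integral\<^sup>L M (\<lambda>x. (S n x)\<^sup>2))"
    by (rule suminf_ennreal2[OF _ summ]) (simp add: integral_nonneg_AE)
  finally have fin: "(\<integral>\<^sup>+ x. (\<Sum>n. ennreal ((S n x)\<^sup>2)) \<partial>M) \<noteq> \<infinity>" by simp
  have "AE x in M. (\<Sum>n. ennreal ((S n x)\<^sup>2)) \<noteq> \<infinity>"
    by (rule nn_integral_noteq_infinite[OF _ fin]) (use meas in auto)
  then show ?thesis
  proof (rule AE_mp, intro AE_I2 impI)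
    fix x assume "(\<Sum>n. ennreal ((S n x)\<^sup>2)) \<noteq> \<infinity>"
    then have "summable (\<lambda>n. (S n x)\<^sup>2)" by (intro summable_suminf_not_top) auto
    then have "(\<lambda>n. (S n x)\<^sup>2) \<longlonglongrightarrow> 0" by (rule summable_LIMSEQ_zero)
    then have "(\<lambda>n. sqrt ((S n x)\<^sup>2)) \<longlonglongrightarrow> sqrt 0" by (rule tendsto_real_sqrt)
    then have "(\<lambda>n. \<bar>S n x\<bar>) \<longlonglongrightarrow> 0" by simp
    then show "(\<lambda>n. S n x) \<longlonglongrightarrow> 0" by (simp add: tendsto_rabs_zero_iff)
  qed
qed

lemma orth_sum:
  fixes X :: "nat \<Rightarrow> 'a \<Rightarrow> real"
  assumes fin: "finite I"
    and int: "\<And>j l. j \<in> I \<Longrightarrow> l \<in> I \<Longrightarrow> integrable M (\<lambda>\<omega>. X j \<omega> * X l \<omega>)"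
    and orth: "\<And>j l. j \<in> I \<Longrightarrow> l \<in> I \<Longrightarrow> j \<noteq> l \<Longrightarrow> integral\<^sup>L M (\<lambda>\<omega>. X j \<omega> * X l \<omega>) = 0"
  shows "integrable M (\<lambda>\<omega>. (\<Sum>j\<in>I. X j \<omega>)\<^sup>2)"
    and "integral\<^sup>L M (\<lambda>\<omega>. (\<Sum>j\<in>I. X j \<omega>)\<^sup>2) = (\<Sum>j\<in>I. integral\<^sup>L M (\<lambda>\<omega>. (X j \<omega>)\<^sup>2))"
proof -
  have eq: "(\<lambda>\<omega>. (\<Sum>j\<in>I. X j \<omega>)\<^sup>2) = (\<lambda>\<omega>. \<Sum>j\<in>I. \<Sum>l\<in>I. X j \<omega> * X l \<omega>)"
    by (simp add: power2_eq_square sum_product)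
  show "integrable M (\<lambda>\<omega>. (\<Sum>j\<in>I. X j \<omega>)\<^sup>2)"
    unfolding eq using int by (intro Bochner_Integration.integrable_sum) auto
  have "integral\<^sup>L M (\<lambda>\<omega>. (\<Sum>j\<in>I. X j \<omega>)\<^sup>2) = (\<Sum>j\<in>I. \<Sum>l\<in>I. integral\<^sup>L M (\<lambda>\<omega>. X j \<omega> * X l \<omega>))"
    unfolding eq using int by (simp add: Bochner_Integration.integral_sum Bochner_Integration.integrable_sum)
  also have "\<dots> = (\<Sum>j\<in>I. \<Sum>l\<in>I. if l = j then integral\<^sup>L M (\<lambda>\<omega>. X j \<omega> * X j \<omega>) else 0)"
    using orth by (intro sum.cong refl) auto
  also have "\<dots> = (\<Sum>j\<in>I. integral\<^sup>L M (\<lambda>\<omega>. (X j \<omega>)\<^sup>2))"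
    using fin by (simp add: sum.delta' power2_eq_square)
  finally show "integral\<^sup>L M (\<lambda>\<omega>. (\<Sum>j\<in>I. X j \<omega>)\<^sup>2) = (\<Sum>j\<in>I. integral\<^sup>L M (\<lambda>\<omega>. (X j \<omega>)\<^sup>2))" .
qed

lemma normal_moments:
  fixes X :: "'a \<Rightarrow> real"
  assumes P: "prob_space M" and v: "0 < v"
    and D: "distributed M lborel X (\<lambda>x. ennreal (normal_density 0 (sqrt v) x))"
  shows "integrable M (\<lambda>\<omega>. X \<omega> ^ k)"
    and "integral\<^sup>L M X = 0"
    and "integral\<^sup>L M (\<lambda>\<omega>. (X \<omega>)\<^sup>2) = v"
    and "integral\<^sup>L M (\<lambda>\<omega>. X \<omega> ^ 4) = 3 * v\<^sup>2"
proof -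
  have s: "0 < sqrt v" using v by simp
  show "integrable M (\<lambda>\<omega>. X \<omega> ^ k)"
    using distributed_integrable[OF D, of "\<lambda>x. x ^ k"] integrable_normal_moment[OF s, of 0 k] by simp
  show "integral\<^sup>L M X = 0"
    using prob_space.normal_distributed_expectation[OF P s D] by simp
  have "integral\<^sup>L M (\<lambda>\<omega>. (X \<omega>)\<^sup>2) = (\<integral>x. normal_density 0 (sqrt v) x * x ^ (2 * 1) \<partial>lborel)"
    using distributed_integral[OF D, of "\<lambda>x. x ^ 2"] by simp
  also have "\<dots> = v" using integral_normal_moment_even[OF s, of 0 1] v by simp
  finally show "integral\<^sup>L M (\<lambda>\<omega>. (X \<omega>)\<^sup>2) = v" .
  have "integral\<^sup>L M (\<lambda>\<omega>. X \<omega> ^ 4) = (\<integral>x. normal_density 0 (sqrt v) x * x ^ (2 * 2) \<partial>lborel)"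
    using distributed_integral[OF D, of "\<lambda>x. x ^ 4"] by simp
  also have "\<dots> = 3 * v\<^sup>2" using integral_normal_moment_even[OF s, of 0 2] v
    by (simp add: fact_numeral power2_eq_square field_simps)
  finally show "integral\<^sup>L M (\<lambda>\<omega>. X \<omega> ^ 4) = 3 * v\<^sup>2" .
qed


context prob_space
begin

lemma wp_incr_dist:
  assumes W: "wiener_process M W" and ab: "0 \<le> a" "a < b"
  shows "distributed M lborel (\<lambda>\<omega>. W b \<omega> - W a \<omega>) (\<lambda>x. ennreal (normal_density 0 (sqrt (b - a)) x))"
  using W ab unfolding wiener_process_def by blast

lemma wp_meas:
  assumes W: "wiener_process M W" and a: "0 \<le> a"
  shows "W a \<in> borel_measurable M"
  using W a unfolding wiener_process_def by blast

lemma wp_moments: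
  assumes W: "wiener_process M W" and ab: "0 \<le> a" "a \<le> b"
  shows "integrable M (\<lambda>\<omega>. (W b \<omega> - W a \<omega>) ^ k)"
    and "expectation (\<lambda>\<omega>. W b \<omega> - W a \<omega>) = 0"
    and "expectation (\<lambda>\<omega>. (W b \<omega> - W a \<omega>)\<^sup>2) = b - a"
    and "expectation (\<lambda>\<omega>. (W b \<omega> - W a \<omega>) ^ 4) = 3 * (b - a)\<^sup>2"
proof -
  have "integrable M (\<lambda>\<omega>. (W b \<omega> - W a \<omega>) ^ k) \<and>
    expectation (\<lambda>\<omega>. W b \<omega> - W a \<omega>) = 0 \<and>
    expectation (\<lambda>\<omega>. (W b \<omega> - W a \<omega>)\<^sup>2) = b - a \<and>
    expectation (\<lambda>\<omega>. (W b \<omega> - W a \<omega>) ^ 4) = 3 * (b - a)\<^sup>2"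
  proof (cases "a = b")
    case True
    then show ?thesis by (simp add: power_0_left)
  next
    case False
    then have ab': "a < b" using ab by simp
    have D: "distributed M lborel (\<lambda>\<omega>. W b \<omega> - W a \<omega>) (\<lambda>x. ennreal (normal_density 0 (sqrt (b - a)) x))"
      by (rule wp_incr_dist[OF W ab(1) ab'])
    have v: "0 < b - a" using ab' by simp
    note nm = normal_moments[OF prob_space_axioms v D]
    show ?thesis using nm(1)[of k] nm(2-4) by simp
  qed
  then show "integrable M (\<lambda>\<omega>. (W b \<omega> - W a \<omega>) ^ k)"
    and "expectation (\<lambda>\<omega>. W b \<omega> - W a \<omega>) = 0"
    and "expectation (\<lambda>\<omega>. (W b \<omega> - W a \<omega>)\<^sup>2) = b - a"
    and "expectation (\<lambda>\<omega>. (W b \<omega> - W a \<omega>) ^ 4) = 3 * (b - a)\<^sup>2" by auto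
qed

lemma indep_vars_pair:
  assumes ind: "indep_vars M' X I" and ab: "a \<in> I" "b \<in> I" "a \<noteq> b"
  shows "indep_var (M' a) (X a) (M' b) (X b)"
proof -
  have "indep_var (PiM {a} M') (\<lambda>\<omega>. restrict (\<lambda>i. X i \<omega>) {a}) (PiM {b} M') (\<lambda>\<omega>. restrict (\<lambda>i. X i \<omega>) {b})"
    by (rule indep_var_restrict[OF ind]) (use ab in auto)
  then have "indep_var (M' a) ((\<lambda>f. f a) \<circ> (\<lambda>\<omega>. restrict (\<lambda>i. X i \<omega>) {a}))
      (M' b) ((\<lambda>f. f b) \<circ> (\<lambda>\<omega>. restrict (\<lambda>i. X i \<omega>) {b}))"
    by (rule indep_var_compose) (auto intro: measurable_component_singleton)
  moreover have "(\<lambda>f. f a) \<circ> (\<lambda>\<omega>. restrict (\<lambda>i. X i \<omega>) {a}) = X a" by (auto simp: fun_eq_iff)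
  moreover have "(\<lambda>f. f b) \<circ> (\<lambda>\<omega>. restrict (\<lambda>i. X i \<omega>) {b}) = X b" by (auto simp: fun_eq_iff)
  ultimately show ?thesis by simp
qed

lemma wp_indep_var:
  assumes W: "wiener_process M W" and ord: "0 \<le> a" "a < b" "b \<le> c" "c < d"
  shows "indep_var borel (\<lambda>\<omega>. W b \<omega> - W a \<omega>) borel (\<lambda>\<omega>. W d \<omega> - W c \<omega>)"
proof -
  have IV: "\<And>(r::nat \<Rightarrow> real) k. 0 \<le> r 0 \<and> (\<forall>j<k. r j < r (Suc j)) \<Longrightarrow>
        indep_vars (\<lambda>_. borel) (\<lambda>j \<omega>. W (r (Suc j)) \<omega> - W (r j) \<omega>) {..<k}"
    using W unfolding wiener_process_def by blast
  show ?thesis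
  proof (cases "b = c")
    case True
    define r :: "nat \<Rightarrow> real" where "r j = (if j = 0 then a else if j = 1 then b else d)" for j
    have "indep_vars (\<lambda>_. borel) (\<lambda>j \<omega>. W (r (Suc j)) \<omega> - W (r j) \<omega>) {..<2}"
    proof (rule IV, intro conjI allI impI)
      show "0 \<le> r 0" using ord by (simp add: r_def)
      fix j :: nat assume "j < 2"
      then have "j = 0 \<or> j = 1" by auto
      then show "r j < r (Suc j)" using ord True by (auto simp: r_def)
    qed
    from indep_vars_pair[OF this, of 0 1] show ?thesis using True by (simp add: r_def)
  next
    case False
    define r :: "nat \<Rightarrow> real" where "r j = (if j = 0 then a else if j = 1 then b else if j = 2 then c else d)" for j
    have "indep_vars (\<lambda>_. borel) (\<lambda>j \<omega>. W (r (Suc j)) \<omega> - W (r j) \<omega>) {..<3}"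
    proof (rule IV, intro conjI allI impI)
      show "0 \<le> r 0" using ord by (simp add: r_def)
      fix j :: nat assume "j < 3"
      then have "j = 0 \<or> j = 1 \<or> j = 2" by auto
      then show "r j < r (Suc j)" using ord False by (auto simp: r_def)
    qed
    from indep_vars_pair[OF this, of 0 2] show ?thesis by (simp add: r_def numeral_eq_Suc)
  qed
qed

lemma wp_indep_int:
  fixes f g :: "real \<Rightarrow> real"
  assumes W: "wiener_process M W" and ord: "0 \<le> a" "a \<le> b" "b \<le> c" "c \<le> d"
    and f: "f \<in> borel_measurable borel" and g: "g \<in> borel_measurable borel"
    and fi: "integrable M (\<lambda>\<omega>. f (W b \<omega> - W a \<omega>))"
    and gi: "integrable M (\<lambda>\<omega>. g (W d \<omega> - W c \<omega>))"
  shows "integrable M (\<lambda>\<omega>. f (W b \<omega> - W a \<omega>) * g (W d \<omega> - W c \<omega>))"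
    and "expectation (\<lambda>\<omega>. f (W b \<omega> - W a \<omega>) * g (W d \<omega> - W c \<omega>)) =
         expectation (\<lambda>\<omega>. f (W b \<omega> - W a \<omega>)) * expectation (\<lambda>\<omega>. g (W d \<omega> - W c \<omega>))"
proof -
  have "integrable M (\<lambda>\<omega>. f (W b \<omega> - W a \<omega>) * g (W d \<omega> - W c \<omega>)) \<and>
    expectation (\<lambda>\<omega>. f (W b \<omega> - W a \<omega>) * g (W d \<omega> - W c \<omega>)) =
         expectation (\<lambda>\<omega>. f (W b \<omega> - W a \<omega>)) * expectation (\<lambda>\<omega>. g (W d \<omega> - W c \<omega>))"
  proof (cases "a = b \<or> c = d")
    case True
    then show ?thesis
    proof
      assume "a = b" then show ?thesis using gi by (simp add: prob_space)
    next
      assume "c = d" then show ?thesis using fi by (simp add: prob_space)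
    qed
  next
    case False
    then have ord': "a < b" "c < d" using ord by auto
    have "indep_var borel (\<lambda>\<omega>. W b \<omega> - W a \<omega>) borel (\<lambda>\<omega>. W d \<omega> - W c \<omega>)"
      by (rule wp_indep_var[OF W ord(1) ord'(1) ord(3) ord'(2)])
    then have iv: "indep_var borel (f \<circ> (\<lambda>\<omega>. W b \<omega> - W a \<omega>)) borel (g \<circ> (\<lambda>\<omega>. W d \<omega> - W c \<omega>))"
      by (rule indep_var_compose[OF _ f g])
    have fi': "integrable M (f \<circ> (\<lambda>\<omega>. W b \<omega> - W a \<omega>))" using fi by (simp add: comp_def)
    have gi': "integrable M (g \<circ> (\<lambda>\<omega>. W d \<omega> - W c \<omega>))" using gi by (simp add: comp_def)
    show ?thesis
      using indep_var_lebesgue_integral[OF iv fi' gi'] indep_var_integrable[OF iv fi' gi']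
      by (simp add: comp_def)
  qed
  then show "integrable M (\<lambda>\<omega>. f (W b \<omega> - W a \<omega>) * g (W d \<omega> - W c \<omega>))"
    and "expectation (\<lambda>\<omega>. f (W b \<omega> - W a \<omega>) * g (W d \<omega> - W c \<omega>)) =
         expectation (\<lambda>\<omega>. f (W b \<omega> - W a \<omega>)) * expectation (\<lambda>\<omega>. g (W d \<omega> - W c \<omega>))" by auto
qed

lemma proc_indep_int:
  fixes W :: "nat \<Rightarrow> real \<Rightarrow> 'a \<Rightarrow> real"
  assumes ind: "indep_processes M t W I" and ik: "i \<in> I" "k \<in> I" "i \<noteq> k"
    and pts: "a \<in> {0..t}" "b \<in> {0..t}" "c \<in> {0..t}" "d \<in> {0..t}"
      "a' \<in> {0..t}" "b' \<in> {0..t}" "c' \<in> {0..t}" "d' \<in> {0..t}"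
    and fi: "integrable M (\<lambda>\<omega>. (W i b \<omega> - W i a \<omega>) * (W i d \<omega> - W i c \<omega>))"
    and gi: "integrable M (\<lambda>\<omega>. (W k b' \<omega> - W k a' \<omega>) * (W k d' \<omega> - W k c' \<omega>))"
  shows "integrable M (\<lambda>\<omega>. ((W i b \<omega> - W i a \<omega>) * (W i d \<omega> - W i c \<omega>)) * ((W k b' \<omega> - W k a' \<omega>) * (W k d' \<omega> - W k c' \<omega>)))"
    and "expectation (\<lambda>\<omega>. ((W i b \<omega> - W i a \<omega>) * (W i d \<omega> - W i c \<omega>)) * ((W k b' \<omega> - W k a' \<omega>) * (W k d' \<omega> - W k c' \<omega>)))
       = expectation (\<lambda>\<omega>. (W i b \<omega> - W i a \<omega>) * (W i d \<omega> - W i c \<omega>)) *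
         expectation (\<lambda>\<omega>. (W k b' \<omega> - W k a' \<omega>) * (W k d' \<omega> - W k c' \<omega>))"
proof -
  let ?P = "PiM {0..t} (\<lambda>_. borel) :: (real \<Rightarrow> real) measure"
  have IV: "indep_var ?P (\<lambda>\<omega>. restrict (\<lambda>s. W i s \<omega>) {0..t}) ?P (\<lambda>\<omega>. restrict (\<lambda>s. W k s \<omega>) {0..t})"
    using indep_vars_pair[OF ind[unfolded indep_processes_def] ik] by simp
  have comp: "(\<lambda>x. x u) \<in> borel_measurable ?P" if "u \<in> {0..t}" for u
    using measurable_component_singleton[OF that, of "\<lambda>_. borel"] by simp
  have F: "(\<lambda>x. (x b - x a) * (x d - x c)) \<in> borel_measurable ?P"
    using comp pts by (intro borel_measurable_times borel_measurable_diff) auto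
  have G: "(\<lambda>x. (x b' - x a') * (x d' - x c')) \<in> borel_measurable ?P"
    using comp pts by (intro borel_measurable_times borel_measurable_diff) auto
  from IV F G have iv: "indep_var borel ((\<lambda>x. (x b - x a) * (x d - x c)) \<circ> (\<lambda>\<omega>. restrict (\<lambda>s. W i s \<omega>) {0..t}))
     borel ((\<lambda>x. (x b' - x a') * (x d' - x c')) \<circ> (\<lambda>\<omega>. restrict (\<lambda>s. W k s \<omega>) {0..t}))"
    by (rule indep_var_compose)
  have e1: "(\<lambda>x. (x b - x a) * (x d - x c)) \<circ> (\<lambda>\<omega>. restrict (\<lambda>s. W i s \<omega>) {0..t})
      = (\<lambda>\<omega>. (W i b \<omega> - W i a \<omega>) * (W i d \<omega> - W i c \<omega>))" using pts by (auto simp: fun_eq_iff)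
  have e2: "(\<lambda>x. (x b' - x a') * (x d' - x c')) \<circ> (\<lambda>\<omega>. restrict (\<lambda>s. W k s \<omega>) {0..t})
      = (\<lambda>\<omega>. (W k b' \<omega> - W k a' \<omega>) * (W k d' \<omega> - W k c' \<omega>))" using pts by (auto simp: fun_eq_iff)
  note iv' = iv[unfolded e1 e2]
  show "integrable M (\<lambda>\<omega>. ((W i b \<omega> - W i a \<omega>) * (W i d \<omega> - W i c \<omega>)) * ((W k b' \<omega> - W k a' \<omega>) * (W k d' \<omega> - W k c' \<omega>)))"
    by (rule indep_var_integrable[OF iv' fi gi])
  show "expectation (\<lambda>\<omega>. ((W i b \<omega> - W i a \<omega>) * (W i d \<omega> - W i c \<omega>)) * ((W k b' \<omega> - W k a' \<omega>) * (W k d' \<omega> - W k c' \<omega>)))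
       = expectation (\<lambda>\<omega>. (W i b \<omega> - W i a \<omega>) * (W i d \<omega> - W i c \<omega>)) *
         expectation (\<lambda>\<omega>. (W k b' \<omega> - W k a' \<omega>) * (W k d' \<omega> - W k c' \<omega>))"
    by (rule indep_var_lebesgue_integral[OF iv' fi gi])
qed

end


lemma integrable_if_const: "integrable M f \<Longrightarrow> integrable M (\<lambda>\<omega>. if C then f \<omega> else (0::real))"
  by (cases C) auto

lemma integral_if_const: "integral\<^sup>L M (\<lambda>\<omega>. if C then f \<omega> else (0::real)) = (if C then integral\<^sup>L M f else 0)"
  by (cases C) auto

context prob_space
begin

lemma qv_L2:
  fixes W :: "nat \<Rightarrow> real \<Rightarrow> 'a \<Rightarrow> real" and p :: "nat \<Rightarrow> real" and r :: real
  assumes wiener: "\<forall>i\<in>{1..N}. wiener_process M (W i)"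
    and indep: "indep_processes M t W {1..N}"
    and P: "ispart p L t h" and h0: "0 \<le> h"
    and i: "i \<in> {1..N}" and k: "k \<in> {1..N}"
  defines "X \<equiv> (\<lambda>j \<omega>. if p (Suc j) \<le> r then
      (W i (p (Suc j)) \<omega> - W i (p j) \<omega>) * (W k (p (Suc j)) \<omega> - W k (p j) \<omega>)
      - (if i = k then p (Suc j) - p j else 0) else 0)"
  shows "(\<lambda>\<omega>. \<Sum>j\<in>{1..<L}. X j \<omega>) \<in> borel_measurable M"
    and "integrable M (\<lambda>\<omega>. (\<Sum>j\<in>{1..<L}. X j \<omega>)\<^sup>2)"
    and "expectation (\<lambda>\<omega>. (\<Sum>j\<in>{1..<L}. X j \<omega>)\<^sup>2) \<le> 2 * h * t"
proof -
  define dW where "dW i' j \<omega> = W i' (p (Suc j)) \<omega> - W i' (p j) \<omega>" for i' j \<omega>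
  define \<Delta> where "\<Delta> j = p (Suc j) - p j" for j
  define Y where "Y j \<omega> = dW i j \<omega> * dW k j \<omega> - (if i = k then \<Delta> j else 0)" for j \<omega>
  have X_eq: "X j \<omega> = (if p (Suc j) \<le> r then Y j \<omega> else 0)" for j \<omega>
    by (simp add: X_def Y_def dW_def \<Delta>_def)
  have Wi: "wiener_process M (W i)" and Wk: "wiener_process M (W k)" using wiener i k by auto
  have pts: "0 \<le> p j" "p j \<le> p (Suc j)" "p (Suc j) \<le> t" "0 \<le> p (Suc j)" "p j \<le> t" if "j \<in> {1..<L}" for j
    using ispart_range[OF P, of j] ispart_range[OF P, of "Suc j"] P that unfolding ispart_def by auto
  have ord: "p (Suc j) \<le> p l" if "j \<in> {1..<L}" "l \<in> {1..<L}" "j < l" for j l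
    using ispart_mono[OF P, of "Suc j" l] that by auto
  have Dlen: "0 \<le> \<Delta> j" "\<Delta> j \<le> h" if "j \<in> {1..<L}" for j
    using P that unfolding ispart_def \<Delta>_def by auto
  have mom: "integrable M (\<lambda>\<omega>. (dW i' j \<omega>) ^ n)" "expectation (dW i' j) = 0"
      "expectation (\<lambda>\<omega>. (dW i' j \<omega>)\<^sup>2) = \<Delta> j" "expectation (\<lambda>\<omega>. (dW i' j \<omega>) ^ 4) = 3 * (\<Delta> j)\<^sup>2"
    if "i' \<in> {1..N}" "j \<in> {1..<L}" for i' j n
  proof -
    have Wi': "wiener_process M (W i')" using wiener that by auto
    note wm = wp_moments[OF Wi' pts(1)[OF that(2)] pts(2)[OF that(2)]]
    show "integrable M (\<lambda>\<omega>. (dW i' j \<omega>) ^ n)" using wm(1)[of n] by (simp add: dW_def)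
    show "expectation (dW i' j) = 0" using wm(2) by (simp add: dW_def[abs_def])
    show "expectation (\<lambda>\<omega>. (dW i' j \<omega>)\<^sup>2) = \<Delta> j" using wm(3) by (simp add: dW_def \<Delta>_def)
    show "expectation (\<lambda>\<omega>. (dW i' j \<omega>) ^ 4) = 3 * (\<Delta> j)\<^sup>2" using wm(4) by (simp add: dW_def \<Delta>_def)
  qed
  have dWint: "integrable M (dW i' j)" if "i' \<in> {1..N}" "j \<in> {1..<L}" for i' j
    using mom(1)[OF that, of 1] by simp
  have dWsq: "integrable M (\<lambda>\<omega>. dW i' j \<omega> * dW i' j \<omega>)" if "i' \<in> {1..N}" "j \<in> {1..<L}" for i' j
    using mom(1)[OF that, of 2] by (simp add: power2_eq_square)
  have pair_lt: "integrable M (\<lambda>\<omega>. dW i' j \<omega> * dW i' l \<omega>) \<and> expectation (\<lambda>\<omega>. dW i' j \<omega> * dW i' l \<omega>) = 0"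
    if "i' \<in> {1..N}" "j \<in> {1..<L}" "l \<in> {1..<L}" "j < l" for i' j l
  proof -
    have Wi': "wiener_process M (W i')" using wiener that by auto
    note wi = wp_indep_int[OF Wi' pts(1)[OF that(2)] pts(2)[OF that(2)] ord[OF that(2-4)] pts(2)[OF that(3)],
        of "\<lambda>x. x" "\<lambda>x. x"]
    have a: "integrable M (\<lambda>\<omega>. W i' (p (Suc j)) \<omega> - W i' (p j) \<omega>)" using dWint[OF that(1,2)] by (simp add: dW_def[abs_def])
    have b: "integrable M (\<lambda>\<omega>. W i' (p (Suc l)) \<omega> - W i' (p l) \<omega>)" using dWint[OF that(1,3)] by (simp add: dW_def[abs_def])
    show ?thesis using wi a b mom(2)[OF that(1,2)] by (simp add: dW_def[abs_def])
  qed
  have pair_int: "integrable M (\<lambda>\<omega>. dW i' j \<omega> * dW i' l \<omega>)"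
    if "i' \<in> {1..N}" "j \<in> {1..<L}" "l \<in> {1..<L}" for i' j l
  proof -
    consider "j < l" | "j = l" | "l < j" by arith
    then show ?thesis
    proof cases
      case 1 then show ?thesis using pair_lt that by blast
    next
      case 2 then show ?thesis using dWsq that by blast
    next
      case 3 then show ?thesis using pair_lt[OF that(1,3,2)] by (simp add: mult.commute)
    qed
  qed
  have Yprops: "integrable M (\<lambda>\<omega>. Y j \<omega> * Y l \<omega>) \<and> (j < l \<longrightarrow> expectation (\<lambda>\<omega>. Y j \<omega> * Y l \<omega>) = 0)
       \<and> (j = l \<longrightarrow> expectation (\<lambda>\<omega>. Y j \<omega> * Y l \<omega>) \<le> 2 * (\<Delta> j)\<^sup>2)"
    if j: "j \<in> {1..<L}" and l: "l \<in> {1..<L}" and jl: "j \<le> l" for j l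
  proof (cases "i = k")
    case True
    define f where "f c x = x\<^sup>2 - c" for c x :: real
    have Yf: "Y j' \<omega> = f (\<Delta> j') (W i (p (Suc j')) \<omega> - W i (p j') \<omega>)" for j' \<omega>
      by (simp add: Y_def f_def True dW_def power2_eq_square)
    have fint: "integrable M (\<lambda>\<omega>. f (\<Delta> j') (W i (p (Suc j')) \<omega> - W i (p j') \<omega>))" if "j' \<in> {1..<L}" for j'
      using mom(1)[OF i that, of 2] by (auto simp: f_def dW_def)
    have fexp: "expectation (\<lambda>\<omega>. f (\<Delta> j') (W i (p (Suc j')) \<omega> - W i (p j') \<omega>)) = 0" if "j' \<in> {1..<L}" for j'
      using mom(1)[OF i that, of 2] mom(3)[OF i that] by (simp add: f_def dW_def prob_space)
    show ?thesis
    proof (cases "j = l")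
      case jl2: True
      have sq: "Y j \<omega> * Y j \<omega> = (dW i j \<omega>) ^ 4 - 2 * \<Delta> j * (dW i j \<omega>)\<^sup>2 + (\<Delta> j)\<^sup>2" for \<omega>
        by (simp add: Y_def True power2_eq_square power4_eq_xxxx algebra_simps)
      have i4: "integrable M (\<lambda>\<omega>. (dW i j \<omega>) ^ 4)" and i2: "integrable M (\<lambda>\<omega>. (dW i j \<omega>)\<^sup>2)"
        using mom(1)[OF i j] by auto
      have int: "integrable M (\<lambda>\<omega>. Y j \<omega> * Y j \<omega>)" unfolding sq using i4 i2 by auto
      have "expectation (\<lambda>\<omega>. Y j \<omega> * Y j \<omega>) = 3 * (\<Delta> j)\<^sup>2 - 2 * \<Delta> j * \<Delta> j + (\<Delta> j)\<^sup>2"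
        unfolding sq using i4 i2 mom(3,4)[OF i j] by (simp add: prob_space)
      also have "\<dots> = 2 * (\<Delta> j)\<^sup>2" by (simp add: power2_eq_square)
      finally show ?thesis using int jl2 by simp
    next
      case False
      then have jl': "j < l" using jl by simp
      have f_meas: "f c \<in> borel_measurable borel" for c unfolding f_def by measurable
      note wi = wp_indep_int[OF Wi pts(1)[OF j] pts(2)[OF j] ord[OF j l jl'] pts(2)[OF l] f_meas f_meas fint[OF j] fint[OF l]]
      show ?thesis using wi fexp[OF j] fexp[OF l] jl' unfolding Yf by simp
    qed
  next
    case False
    have Yeq: "Y j' \<omega> = dW i j' \<omega> * dW k j' \<omega>" for j' \<omega> using False by (simp add: Y_def)
    have YY: "Y j \<omega> * Y l \<omega> = (dW i j \<omega> * dW i l \<omega>) * (dW k j \<omega> * dW k l \<omega>)" for \<omega>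
      unfolding Yeq by (simp add: mult_ac)
    note pi = proc_indep_int[OF indep i k False, of "p j" "p (Suc j)" "p l" "p (Suc l)" "p j" "p (Suc j)" "p l" "p (Suc l)"]
    have pts': "p j \<in> {0..t}" "p (Suc j) \<in> {0..t}" "p l \<in> {0..t}" "p (Suc l) \<in> {0..t}"
      using pts[OF j] pts[OF l] by auto
    have f1: "integrable M (\<lambda>\<omega>. (W i (p (Suc j)) \<omega> - W i (p j) \<omega>) * (W i (p (Suc l)) \<omega> - W i (p l) \<omega>))"
      using pair_int[OF i j l] by (simp add: dW_def)
    have f2: "integrable M (\<lambda>\<omega>. (W k (p (Suc j)) \<omega> - W k (p j) \<omega>) * (W k (p (Suc l)) \<omega> - W k (p l) \<omega>))"
      using pair_int[OF k j l] by (simp add: dW_def)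
    note pi' = pi[OF pts' pts' f1 f2]
    have int: "integrable M (\<lambda>\<omega>. Y j \<omega> * Y l \<omega>)" unfolding YY using pi'(1) by (simp add: dW_def)
    have ex: "expectation (\<lambda>\<omega>. Y j \<omega> * Y l \<omega>) = expectation (\<lambda>\<omega>. dW i j \<omega> * dW i l \<omega>) * expectation (\<lambda>\<omega>. dW k j \<omega> * dW k l \<omega>)"
      unfolding YY using pi'(2) by (simp add: dW_def)
    show ?thesis
    proof (cases "j = l")
      case True
      have "expectation (\<lambda>\<omega>. dW i j \<omega> * dW i j \<omega>) = \<Delta> j" using mom(3)[OF i j] by (simp add: power2_eq_square)
      moreover have "expectation (\<lambda>\<omega>. dW k j \<omega> * dW k j \<omega>) = \<Delta> j" using mom(3)[OF k j] by (simp add: power2_eq_square)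
      ultimately have "expectation (\<lambda>\<omega>. Y j \<omega> * Y l \<omega>) = (\<Delta> j)\<^sup>2" using ex True by (simp add: power2_eq_square)
      moreover have "(\<Delta> j)\<^sup>2 \<le> 2 * (\<Delta> j)\<^sup>2" by simp
      ultimately show ?thesis using int True by simp
    next
      case False
      then have "j < l" using jl by simp
      then have "expectation (\<lambda>\<omega>. dW i j \<omega> * dW i l \<omega>) = 0" using pair_lt[OF i j l] by simp
      then show ?thesis using int ex False by simp
    qed
  qed
  have XX: "X j \<omega> * X l \<omega> = (if p (Suc j) \<le> r \<and> p (Suc l) \<le> r then Y j \<omega> * Y l \<omega> else 0)" for j l \<omega>
    unfolding X_eq by simp
  have Yint: "integrable M (\<lambda>\<omega>. Y j \<omega> * Y l \<omega>)" if "j \<in> {1..<L}" "l \<in> {1..<L}" for j l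
  proof (cases "j \<le> l")
    case True then show ?thesis using Yprops[OF that True] by auto
  next
    case False
    then have "integrable M (\<lambda>\<omega>. Y l \<omega> * Y j \<omega>)" using Yprops[OF that(2,1)] by auto
    then show ?thesis by (simp add: mult.commute)
  qed
  have Xint: "integrable M (\<lambda>\<omega>. X j \<omega> * X l \<omega>)" if "j \<in> {1..<L}" "l \<in> {1..<L}" for j l
    unfolding XX using Yint[OF that] by (rule integrable_if_const)
  have Yorth: "expectation (\<lambda>\<omega>. Y j \<omega> * Y l \<omega>) = 0" if "j \<in> {1..<L}" "l \<in> {1..<L}" "j \<noteq> l" for j l
  proof (cases "j < l")
    case True
    then show ?thesis using Yprops[OF that(1,2)] by auto
  next
    case False
    then have "l < j" using that by simp
    then have "expectation (\<lambda>\<omega>. Y l \<omega> * Y j \<omega>) = 0" using Yprops[OF that(2,1)] by auto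
    then show ?thesis by (simp add: mult.commute)
  qed
  have Xorth: "expectation (\<lambda>\<omega>. X j \<omega> * X l \<omega>) = 0" if "j \<in> {1..<L}" "l \<in> {1..<L}" "j \<noteq> l" for j l
    unfolding XX integral_if_const using Yorth[OF that] by simp
  have Xsq: "expectation (\<lambda>\<omega>. (X j \<omega>)\<^sup>2) \<le> 2 * h * \<Delta> j" if j: "j \<in> {1..<L}" for j
  proof -
    have "expectation (\<lambda>\<omega>. (X j \<omega>)\<^sup>2) \<le> 2 * (\<Delta> j)\<^sup>2"
    proof (cases "p (Suc j) \<le> r")
      case True
      then have "expectation (\<lambda>\<omega>. (X j \<omega>)\<^sup>2) = expectation (\<lambda>\<omega>. Y j \<omega> * Y j \<omega>)"
        unfolding X_eq by (simp add: power2_eq_square)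
      then show ?thesis using Yprops[OF j j] by simp
    next
      case False then show ?thesis unfolding X_eq by simp
    qed
    also have "\<dots> \<le> 2 * h * \<Delta> j" using Dlen[OF j]
      by (simp add: power2_eq_square mult_right_mono)
    finally show ?thesis .
  qed
  note os = orth_sum[of "{1..<L}" M X, OF _ Xint Xorth]
  show "integrable M (\<lambda>\<omega>. (\<Sum>j\<in>{1..<L}. X j \<omega>)\<^sup>2)" using os(1) by simp
  have "expectation (\<lambda>\<omega>. (\<Sum>j\<in>{1..<L}. X j \<omega>)\<^sup>2) = (\<Sum>j\<in>{1..<L}. expectation (\<lambda>\<omega>. (X j \<omega>)\<^sup>2))"
    using os(2) by simp
  also have "\<dots> \<le> (\<Sum>j\<in>{1..<L}. 2 * h * \<Delta> j)" using Xsq by (rule sum_mono)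
  also have "\<dots> = 2 * h * (\<Sum>j\<in>{1..<L}. \<Delta> j)" by (simp add: sum_distrib_left)
  also have "(\<Sum>j\<in>{1..<L}. \<Delta> j) = p L - p 1"
    unfolding \<Delta>_def using P by (intro sum_Suc_diff') (auto simp: ispart_def)
  also have "p L - p 1 = t" using P by (simp add: ispart_def)
  finally show "expectation (\<lambda>\<omega>. (\<Sum>j\<in>{1..<L}. X j \<omega>)\<^sup>2) \<le> 2 * h * t" .
  have mW: "W i' u \<in> borel_measurable M" if "i' \<in> {1..N}" "0 \<le> u" for i' u
    using wp_meas[of "W i'" u] wiener that by auto
  have "X j \<in> borel_measurable M" if "j \<in> {1..<L}" for j
    unfolding X_def using mW pts[OF that] i k by (auto intro!: borel_measurable_times borel_measurable_diff)
  then show "(\<lambda>\<omega>. \<Sum>j\<in>{1..<L}. X j \<omega>) \<in> borel_measurable M" by auto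
qed

end


lemma subseq_fast:
  fixes h :: "nat \<Rightarrow> real"
  assumes h: "h \<longlonglongrightarrow> 0"
  shows "\<exists>\<phi>. strict_mono \<phi> \<and> (\<forall>n. \<bar>h (\<phi> n)\<bar> < (1/2) ^ n)"
proof -
  have "\<exists>N. \<forall>k\<ge>N. \<bar>h k\<bar> < (1/2) ^ n" for n
  proof -
    have "(0::real) < (1/2) ^ n" by simp
    from LIMSEQ_D[OF h this] show ?thesis by auto
  qed
  then obtain g where g: "\<And>n k. k \<ge> g n \<Longrightarrow> \<bar>h k\<bar> < (1/2) ^ n" by metis
  define \<phi> where "\<phi> n = (\<Sum>i\<le>n. g i) + n" for n
  have "strict_mono \<phi>" unfolding strict_mono_Suc_iff \<phi>_def by simp
  moreover have "\<phi> n \<ge> g n" for n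
  proof -
    have "g n \<le> (\<Sum>i\<le>n. g i)" by (rule member_le_sum) auto
    then show ?thesis by (simp add: \<phi>_def)
  qed
  ultimately show ?thesis using g by blast
qed

theorem lemma4p1:
  fixes M :: "'a measure" and t :: real
    and \<A> :: "(real \<Rightarrow> 'a \<Rightarrow> real) set" and \<Omega>\<A> :: "'a set"
    and N :: nat and W :: "nat \<Rightarrow> real \<Rightarrow> 'a \<Rightarrow> real"
    and s :: "nat \<Rightarrow> nat \<Rightarrow> real" and m :: "nat \<Rightarrow> nat"
  assumes "prob_space M"
    and proc: "\<forall>X\<in>\<A>. \<forall>r\<in>{0..t}. X r \<in> borel_measurable M"
    and \<Omega>\<A>_meas: "\<Omega>\<A> \<in> sets M" and \<Omega>\<A>_full: "measure M \<Omega>\<A> = 1"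
    and \<Omega>\<A>_paths: "\<forall>X\<in>\<A>. \<forall>\<omega>\<in>\<Omega>\<A>.
        continuous_on {0..t} (\<lambda>r. X r \<omega>) \<and> bounded_variation_on (\<lambda>r. X r \<omega>) 0 t"
    and wiener: "\<forall>i\<in>{1..N}. wiener_process M (W i)"
    and indep: "indep_processes M t W {1..N}"
    and part_m: "\<forall>n. 1 \<le> m n"
    and part_0: "\<forall>n. s n 1 = 0" and part_t: "\<forall>n. s n (m n) = t"
    and part_mono: "\<forall>n. \<forall>j\<in>{1..<m n}. s n j \<le> s n (Suc j)"
    and mesh: "(\<lambda>n. Max (insert 0 ((\<lambda>j. s n (Suc j) - s n j) ` {1..<m n}))) \<longlonglongrightarrow> 0"
  shows "\<exists>\<Omega>'. \<Omega>' \<in> sets M \<and> measure M \<Omega>' = 1 \<and> \<Omega>' \<subseteq> \<Omega>\<A> \<and>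
     (\<exists>\<phi>::nat \<Rightarrow> nat. strict_mono \<phi> \<and>
       (\<forall>X Y. X \<in> \<A> \<longrightarrow> (\<forall>i\<in>{1..N}. Y i \<in> \<A>) \<longrightarrow>
         (\<forall>\<omega>\<in>\<Omega>'.
            (let Z = (\<lambda>r. X r \<omega> + (\<Sum>i=1..N. Y i r \<omega> * W i r \<omega>)) in
             (\<lambda>n. \<Sum>j\<in>{1..<m (\<phi> n)}. (Z (s (\<phi> n) (Suc j)) - Z (s (\<phi> n) j))\<^sup>2)
               \<longlonglongrightarrow> (\<Sum>i=1..N. integral {0..t} (\<lambda>r. (Y i r \<omega>)\<^sup>2))))))"
proof -
  note PS = \<open>prob_space M\<close>
  interpret prob_space M by (rule PS)
  define h where "h n = Max (insert 0 ((\<lambda>j. s n (Suc j) - s n j) ` {1..<m n}))" for n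
  have h0: "0 \<le> h n" for n unfolding h_def by (rule Max_ge) auto
  have Part: "ispart (s n) (m n) t (h n)" for n
    unfolding ispart_def
  proof (intro conjI ballI)
    show "1 \<le> m n" "s n 1 = 0" "s n (m n) = t" using part_m part_0 part_t by auto
    fix j assume j: "j \<in> {1..<m n}"
    show "s n j \<le> s n (Suc j)" using part_mono j by auto
    show "s n (Suc j) - s n j \<le> h n" unfolding h_def using j by (intro Max_ge) auto
  qed
  have t0: "0 \<le> t" using ispart_t[OF Part[of 0]] .
  have hlim: "h \<longlonglongrightarrow> 0" using mesh unfolding h_def[abs_def] .
  obtain \<phi> where \<phi>: "strict_mono \<phi>" and h\<phi>: "\<And>n. \<bar>h (\<phi> n)\<bar> < (1/2) ^ n"
    using subseq_fast[OF hlim] by blast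
  define S where "S i k K kk n \<omega> = (\<Sum>j\<in>{1..<m (\<phi> n)}. if s (\<phi> n) (Suc j) \<le> t * real kk / real K then
      (W i (s (\<phi> n) (Suc j)) \<omega> - W i (s (\<phi> n) j) \<omega>) * (W k (s (\<phi> n) (Suc j)) \<omega> - W k (s (\<phi> n) j) \<omega>)
      - (if i = k then s (\<phi> n) (Suc j) - s (\<phi> n) j else 0) else 0)" for i k K kk n \<omega>
  have AE_S: "AE \<omega> in M. (\<lambda>n. S i k K kk n \<omega>) \<longlonglongrightarrow> 0" if i: "i \<in> {1..N}" and k: "k \<in> {1..N}" for i k K kk
  proof (rule as_conv)
    fix n
    note q = qv_L2[OF wiener indep Part[of "\<phi> n"] h0[of "\<phi> n"] i k, where r = "t * real kk / real K"]
    show "S i k K kk n \<in> borel_measurable M" using q(1) unfolding S_def[abs_def] by simp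
    show "integrable M (\<lambda>x. (S i k K kk n x)\<^sup>2)" using q(2) unfolding S_def by simp
  next
    have bnd: "expectation (\<lambda>x. (S i k K kk n x)\<^sup>2) \<le> 2 * t * (1/2) ^ n" for n
    proof -
      note q = qv_L2[OF wiener indep Part[of "\<phi> n"] h0[of "\<phi> n"] i k, where r = "t * real kk / real K"]
      have "expectation (\<lambda>x. (S i k K kk n x)\<^sup>2) \<le> 2 * h (\<phi> n) * t" using q(3) unfolding S_def by simp
      also have "\<dots> \<le> 2 * (1/2) ^ n * t"
        using h\<phi>[of n] h0[of "\<phi> n"] t0 by (intro mult_right_mono) auto
      finally show ?thesis by (simp add: mult_ac)
    qed
    show "summable (\<lambda>n. expectation (\<lambda>x. (S i k K kk n x)\<^sup>2))"
    proof (rule summable_comparison_test')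
      show "summable (\<lambda>n. 2 * t * (1/2::real) ^ n)"
        by (intro summable_mult summable_geometric) simp
      fix n :: nat
      have "0 \<le> expectation (\<lambda>x. (S i k K kk n x)\<^sup>2)" by (intro integral_nonneg_AE) auto
      then show "norm (expectation (\<lambda>x. (S i k K kk n x)\<^sup>2)) \<le> 2 * t * (1/2) ^ n" using bnd[of n] by simp
    qed
  qed
  have AE_QV: "AE \<omega> in M. \<forall>i k K kk. i \<in> {1..N} \<longrightarrow> k \<in> {1..N} \<longrightarrow> (\<lambda>n. S i k K kk n \<omega>) \<longlonglongrightarrow> 0"
  proof -
    have "\<forall>i k K kk. AE \<omega> in M. i \<in> {1..N} \<longrightarrow> k \<in> {1..N} \<longrightarrow> (\<lambda>n. S i k K kk n \<omega>) \<longlonglongrightarrow> 0"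
    proof (intro allI)
      fix i k K kk
      show "AE \<omega> in M. i \<in> {1..N} \<longrightarrow> k \<in> {1..N} \<longrightarrow> (\<lambda>n. S i k K kk n \<omega>) \<longlonglongrightarrow> 0"
      proof (cases "i \<in> {1..N} \<and> k \<in> {1..N}")
        case True then show ?thesis using AE_S[of i k K kk] by simp
      next
        case False then show ?thesis by (intro AE_I2) blast
      qed
    qed
    then show ?thesis by (simp add: AE_all_countable)
  qed
  have AE_cont: "AE \<omega> in M. \<forall>i. i \<in> {1..N} \<longrightarrow> continuous_on {0..} (\<lambda>r. W i r \<omega>)"
  proof -
    have "\<forall>i. AE \<omega> in M. i \<in> {1..N} \<longrightarrow> continuous_on {0..} (\<lambda>r. W i r \<omega>)"
    proof
      fix i
      show "AE \<omega> in M. i \<in> {1..N} \<longrightarrow> continuous_on {0..} (\<lambda>r. W i r \<omega>)"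
      proof (cases "i \<in> {1..N}")
        case True
        then have "AE \<omega> in M. continuous_on {0..} (\<lambda>r. W i r \<omega>)"
          using wiener unfolding wiener_process_def by blast
        then show ?thesis by simp
      next
        case False then show ?thesis by (intro AE_I2) blast
      qed
    qed
    then show ?thesis by (simp add: AE_all_countable)
  qed
  have AE_A: "AE \<omega> in M. \<omega> \<in> \<Omega>\<A>" by (rule AE_prob_1) (use \<Omega>\<A>_full in simp)
  have "AE \<omega> in M. \<omega> \<in> \<Omega>\<A> \<and> (\<forall>i. i \<in> {1..N} \<longrightarrow> continuous_on {0..} (\<lambda>r. W i r \<omega>)) \<and>
      (\<forall>i k K kk. i \<in> {1..N} \<longrightarrow> k \<in> {1..N} \<longrightarrow> (\<lambda>n. S i k K kk n \<omega>) \<longlonglongrightarrow> 0)"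
    using AE_A AE_cont AE_QV by eventually_elim auto
  then obtain N0 where N0: "\<And>\<omega>. \<omega> \<in> space M - N0 \<Longrightarrow> \<omega> \<in> \<Omega>\<A> \<and> (\<forall>i. i \<in> {1..N} \<longrightarrow> continuous_on {0..} (\<lambda>r. W i r \<omega>)) \<and>
      (\<forall>i k K kk. i \<in> {1..N} \<longrightarrow> k \<in> {1..N} \<longrightarrow> (\<lambda>n. S i k K kk n \<omega>) \<longlonglongrightarrow> 0)"
    and N0null: "N0 \<in> null_sets M"
    by (rule AE_E3) blast
  define \<Omega>' where "\<Omega>' = space M - N0"
  have N0ev: "N0 \<in> events" using N0null by auto
  have \<Omega>'_sets: "\<Omega>' \<in> sets M" unfolding \<Omega>'_def using N0ev by auto
  have \<Omega>'_prob: "measure M \<Omega>' = 1"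
    unfolding \<Omega>'_def using prob_compl[OF N0ev] measure_eq_0_null_sets[OF N0null] by simp
  have \<Omega>'_sub: "\<Omega>' \<subseteq> \<Omega>\<A>" unfolding \<Omega>'_def using N0 by blast
  show ?thesis
  proof (intro exI conjI allI impI ballI)
    show "\<Omega>' \<in> sets M" "measure M \<Omega>' = 1" "\<Omega>' \<subseteq> \<Omega>\<A>" "strict_mono \<phi>"
      using \<Omega>'_sets \<Omega>'_prob \<Omega>'_sub \<phi> by auto
    fix X Y \<omega>
    assume X: "X \<in> \<A>" and Y: "\<forall>i\<in>{1..N}. Y i \<in> \<A>" and \<omega>: "\<omega> \<in> \<Omega>'"
    have \<omega>A: "\<omega> \<in> \<Omega>\<A>" and
      wcont: "\<And>i. i \<in> {1..N} \<Longrightarrow> continuous_on {0..} (\<lambda>r. W i r \<omega>)" and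
      Sconv: "\<And>i k K kk. i \<in> {1..N} \<Longrightarrow> k \<in> {1..N} \<Longrightarrow> (\<lambda>n. S i k K kk n \<omega>) \<longlonglongrightarrow> 0"
      using N0[of \<omega>] \<omega> unfolding \<Omega>'_def by auto
    define Z where "Z = (\<lambda>r. X r \<omega> + (\<Sum>i=1..N. Y i r \<omega> * W i r \<omega>))"
    have "(\<lambda>n. \<Sum>j\<in>{1..<m (\<phi> n)}. (Z (s (\<phi> n) (Suc j)) - Z (s (\<phi> n) j))\<^sup>2)
               \<longlonglongrightarrow> (\<Sum>i=1..N. integral {0..t} (\<lambda>r. (Y i r \<omega>)\<^sup>2))"
    proof (rule det_main[where q = "\<lambda>n. s (\<phi> n)" and L = "\<lambda>n. m (\<phi> n)" and h = "\<lambda>n. h (\<phi> n)"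
          and w = "\<lambda>i r. W i r \<omega>" and x = "\<lambda>r. X r \<omega>" and y = "\<lambda>i r. Y i r \<omega>"])
      show "\<forall>n. ispart (s (\<phi> n)) (m (\<phi> n)) t (h (\<phi> n))" using Part by simp
      show "(\<lambda>n. h (\<phi> n)) \<longlonglongrightarrow> 0" using LIMSEQ_subseq_LIMSEQ[OF hlim \<phi>] by (simp add: comp_def)
      show "\<forall>i\<in>{1..N}. continuous_on {0..t} (\<lambda>r. W i r \<omega>)"
      proof
        fix i assume "i \<in> {1..N}"
        then show "continuous_on {0..t} (\<lambda>r. W i r \<omega>)"
          by (rule continuous_on_subset[OF wcont]) auto
      qed
      show "continuous_on {0..t} (\<lambda>r. X r \<omega>)" "bounded_variation_on (\<lambda>r. X r \<omega>) 0 t"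
        using \<Omega>\<A>_paths X \<omega>A by auto
      show "\<forall>i\<in>{1..N}. continuous_on {0..t} (\<lambda>r. Y i r \<omega>)"
        "\<forall>i\<in>{1..N}. bounded_variation_on (\<lambda>r. Y i r \<omega>) 0 t"
        using \<Omega>\<A>_paths Y \<omega>A by auto
      show "\<And>r. Z r = X r \<omega> + (\<Sum>i=1..N. Y i r \<omega> * W i r \<omega>)" by (simp add: Z_def)
      show "\<forall>i\<in>{1..N}. \<forall>k\<in>{1..N}. \<forall>K kk. 0 < K \<longrightarrow> kk \<le> K \<longrightarrow>
       (\<lambda>n. \<Sum>j\<in>{1..<m (\<phi> n)}. if s (\<phi> n) (Suc j) \<le> t * real kk / real K
            then (W i (s (\<phi> n) (Suc j)) \<omega> - W i (s (\<phi> n) j) \<omega>) * (W k (s (\<phi> n) (Suc j)) \<omega> - W k (s (\<phi> n) j) \<omega>) else 0)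
         \<longlonglongrightarrow> (if i = k then 1 else 0) * (t * real kk / real K)"
      proof (intro ballI allI impI)
        fix i k K kk assume i: "i \<in> {1..N}" and k: "k \<in> {1..N}" and K: "0 < (K::nat)" and kk: "kk \<le> K"
        define r where "r = t * real kk / real K"
        have r: "0 \<le> r" "r \<le> t"
        proof -
          show "0 \<le> r" using t0 by (simp add: r_def)
          have "t * real kk \<le> t * real K" using kk t0 by (intro mult_left_mono) auto
          then show "r \<le> t" using K by (simp add: r_def pos_divide_le_eq)
        qed
        define F where "F n = (\<Sum>j\<in>{1..<m (\<phi> n)}. if s (\<phi> n) (Suc j) \<le> r then s (\<phi> n) (Suc j) - s (\<phi> n) j else 0)" for n
        have Fconv: "F \<longlonglongrightarrow> r"
        proof -
          have "(\<lambda>n. F n - r) \<longlonglongrightarrow> 0"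
          proof (rule Lim_null_comparison)
            show "eventually (\<lambda>n. norm (F n - r) \<le> h (\<phi> n)) sequentially"
              using ispart_tele[OF Part h0 r] by (simp add: F_def)
            show "(\<lambda>n. h (\<phi> n)) \<longlonglongrightarrow> 0" using LIMSEQ_subseq_LIMSEQ[OF hlim \<phi>] by (simp add: comp_def)
          qed
          then have "(\<lambda>n. F n - r + r) \<longlonglongrightarrow> 0 + r" by (intro tendsto_add tendsto_const)
          then show ?thesis by simp
        qed
        have eq: "(\<Sum>j\<in>{1..<m (\<phi> n)}. if s (\<phi> n) (Suc j) \<le> r
            then (W i (s (\<phi> n) (Suc j)) \<omega> - W i (s (\<phi> n) j) \<omega>) * (W k (s (\<phi> n) (Suc j)) \<omega> - W k (s (\<phi> n) j) \<omega>) else 0)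
            = S i k K kk n \<omega> + (if i = k then 1 else 0) * F n" for n
        proof -
          have "S i k K kk n \<omega> + (if i = k then 1 else 0) * F n =
             (\<Sum>j\<in>{1..<m (\<phi> n)}. (if s (\<phi> n) (Suc j) \<le> r then
      (W i (s (\<phi> n) (Suc j)) \<omega> - W i (s (\<phi> n) j) \<omega>) * (W k (s (\<phi> n) (Suc j)) \<omega> - W k (s (\<phi> n) j) \<omega>)
      - (if i = k then s (\<phi> n) (Suc j) - s (\<phi> n) j else 0) else 0) +
             (if i = k then 1 else 0) * (if s (\<phi> n) (Suc j) \<le> r then s (\<phi> n) (Suc j) - s (\<phi> n) j else 0))"
            unfolding S_def F_def r_def sum.distrib sum_distrib_left by simp
          also have "\<dots> = (\<Sum>j\<in>{1..<m (\<phi> n)}. if s (\<phi> n) (Suc j) \<le> r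
            then (W i (s (\<phi> n) (Suc j)) \<omega> - W i (s (\<phi> n) j) \<omega>) * (W k (s (\<phi> n) (Suc j)) \<omega> - W k (s (\<phi> n) j) \<omega>) else 0)"
            by (intro sum.cong refl) auto
          finally show ?thesis by simp
        qed
        have "(\<lambda>n. S i k K kk n \<omega> + (if i = k then 1 else 0) * F n) \<longlonglongrightarrow> 0 + (if i = k then 1 else 0) * r"
          by (intro tendsto_add tendsto_mult tendsto_const Sconv[OF i k] Fconv)
        then show "(\<lambda>n. \<Sum>j\<in>{1..<m (\<phi> n)}. if s (\<phi> n) (Suc j) \<le> t * real kk / real K
            then (W i (s (\<phi> n) (Suc j)) \<omega> - W i (s (\<phi> n) j) \<omega>) * (W k (s (\<phi> n) (Suc j)) \<omega> - W k (s (\<phi> n) j) \<omega>) else 0)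
         \<longlonglongrightarrow> (if i = k then 1 else 0) * (t * real kk / real K)"
          unfolding r_def[symmetric] eq by simp
      qed
    qed
    then show "let Z = (\<lambda>r. X r \<omega> + (\<Sum>i=1..N. Y i r \<omega> * W i r \<omega>)) in
             (\<lambda>n. \<Sum>j\<in>{1..<m (\<phi> n)}. (Z (s (\<phi> n) (Suc j)) - Z (s (\<phi> n) j))\<^sup>2)
               \<longlonglongrightarrow> (\<Sum>i=1..N. integral {0..t} (\<lambda>r. (Y i r \<omega>)\<^sup>2))"
      unfolding Z_def Let_def .
  qed
qed


end
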